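(* Let $(t_\varepsilon)_\varepsilon$ be the net defined below. For every compact $K\subseteq\mathbb{R}^2$ and every $\delta>0$ there exist $\eta>0$ and $\varepsilon_0\in(0,1]$ such that every principal minor of the Jacobian matrix $Dt_\varepsilon(U,X^1,X^2,V)$ lies in $(1-\delta,1+\delta)$ for all $(U,X^1,X^2,V)\in(-\infty,\eta]\times K\times\mathbb{R}$ and all $\varepsilon\le\varepsilon_0$. In particular, every principal minor of $Dt_\varepsilon$ is positive on $(-\infty,\eta]\times K\times\mathbb{R}$ for $\varepsilon\le\varepsilon_0$, and $\det\circ DT=[(\det Dt_\varepsilon)_\varepsilon]$ is strictly non-zero on $(-\infty,\eta]\times K\times\mathbb{R}$.
   Context: A net $(u_\varepsilon)_\varepsilon$ is strictly non-zero on a set $A$ if there exist $C>0$, $N\in\mathbb{N}$, $\varepsilon_0\in(0,1]$ with $\inf_{x\in A}|u_\varepsilon(x)|\ge C\varepsilon^N$ for all $\varepsilon\le\varepsilon_0$. Strict delta net: a net $(\delta_\varepsilon)_{\varepsilon\in(0,1]}$ of smooth compactly supported functions on $\mathbb{R}$ with $\operatorname{supp}\delta_\varepsilon\subseteq[-\varepsilon,\varepsilon]$, $\int\delta_\varepsilon\to1$ as $\varepsilon\to0$, and $\int|\delta_\varepsilon|\le C$ for some $C>0$ and small $\varepsilon$. The transformation: fix $f\in C^\infty(\mathbb{R}^2,\mathbb{R})$ and a strict delta net $(\delta_\varepsilon)_\varepsilon$; write $X=(X^1,X^2)$. Let $(x_\varepsilon)_\varepsilon=(x_\varepsilon^1,x_\varepsilon^2)_\varepsilon\in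 C^\infty(\mathbb{R}^2\times\mathbb{R},\mathbb{R}^2)^{(0,1]}$ be a fixed net such that for every compact $K\subseteq\mathbb{R}^2$ there is $\varepsilon_K$ such that for all $X\in K$ and $\varepsilon\le\varepsilon_K$, $U\mapsto x_\varepsilon(X,U)$ is the solution on all of $\mathbb{R}$ of $\partial_U^2x_\varepsilon^i(X,U)=\frac12\partial_if(x_\varepsilon(X,U))\,\delta_\varepsilon(U)$, $x_\varepsilon^i(X,-1)=X^i$, $\partial_Ux_\varepsilon^i(X,-1)=0$ ($i=1,2$) (such a net exists). Write $\dot x_\varepsilon^i=\partial_U x_\varepsilon^i$. Define $$v_\varepsilon(X,V,U)=V+\int_{-\varepsilon}^U f(x_\varepsilon(X,s))\delta_\varepsilon(s)\,ds+\int_{-\varepsilon}^U\int_{-\varepsilon}^s\sum_{i=1}^2\partial_if(x_\varepsilon(X,r))\,\dot x_\varepsilon^i(X,r)\,\delta_\varepsilon(r)\,dr\,ds,$$ and $t_\varepsilon:\mathbb{R}^4\to\mathbb{R}^4$, $t_\varepsilon(U,X^1,X^2,V)=(U,x_\varepsilon^1(X,U),x_\varepsilon^2(X,U),v_\varepsilon(X,V,U))$; $T:=[(t_\varepsilon)_\varepsilon]$, a Colombeau generalized function on $\mathbb{R}^4$ with values in $\mathbb{R}^4$. *)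

theory Defs
  imports "HOL-Analysis.Analysis"
begin

fun Ck :: "nat \<Rightarrow> ('a::euclidean_space \<Rightarrow> 'b::real_normed_vector) \<Rightarrow> bool" where
  "Ck 0 f = continuous_on UNIV f"
| "Ck (Suc k) f = ((\<forall>x. f differentiable (at x)) \<and>
      (\<forall>v. Ck k (\<lambda>x. frechet_derivative f (at x) v)))"

definition smooth :: "('a::euclidean_space \<Rightarrow> 'b::real_normed_vector) \<Rightarrow> bool" where
  "smooth f \<longleftrightarrow> (\<forall>k. Ck k f)"

definition partial :: "(real^2 \<Rightarrow> real) \<Rightarrow> 2 \<Rightarrow> real^2 \<Rightarrow> real" where
  "partial f i p = frechet_derivative f (at p) (axis i 1)"

definition oint :: "real \<Rightarrow> real \<Rightarrow> (real \<Rightarrow> real) \<Rightarrow> real" where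
  "oint a b g = (if a \<le> b then integral {a..b} g else - integral {b..a} g)"

definition strict_delta_net :: "(real \<Rightarrow> real \<Rightarrow> real) \<Rightarrow> bool" where
  "strict_delta_net \<delta> \<longleftrightarrow>
     (\<forall>\<epsilon>\<in>{0<..1}. smooth (\<delta> \<epsilon>) \<and> (\<forall>u. \<bar>u\<bar> > \<epsilon> \<longrightarrow> \<delta> \<epsilon> u = 0)) \<and>
     ((\<lambda>\<epsilon>. integral UNIV (\<delta> \<epsilon>)) \<longlongrightarrow> 1) (at_right 0) \<and>
     (\<exists>C>0. \<forall>\<^sub>F \<epsilon> in at_right 0. integral UNIV (\<lambda>u. \<bar>\<delta> \<epsilon> u\<bar>) \<le> C)"

definition xdot :: "(real \<Rightarrow> real^2 \<Rightarrow> real \<Rightarrow> real^2) \<Rightarrow> real \<Rightarrow> real^2 \<Rightarrow> real \<Rightarrow> real^2" where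
  "xdot x \<epsilon> X U = vector_derivative (\<lambda>s. x \<epsilon> X s) (at U)"

definition geodesic_net ::
  "(real^2 \<Rightarrow> real) \<Rightarrow> (real \<Rightarrow> real \<Rightarrow> real) \<Rightarrow> (real \<Rightarrow> real^2 \<Rightarrow> real \<Rightarrow> real^2) \<Rightarrow> bool" where
  "geodesic_net f \<delta> x \<longleftrightarrow>
     (\<forall>\<epsilon>\<in>{0<..1}. smooth (\<lambda>p::(real^2) \<times> real. x \<epsilon> (fst p) (snd p))) \<and>
     (\<forall>K. compact K \<longrightarrow> (\<exists>\<epsilon>K>0. \<forall>X\<in>K. \<forall>\<epsilon>\<in>{0<..1}. \<epsilon> \<le> \<epsilon>K \<longrightarrow>
        (\<forall>U. \<forall>i. ((\<lambda>s. xdot x \<epsilon> X s $ i) has_real_derivative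
                    (1/2 * partial f i (x \<epsilon> X U) * \<delta> \<epsilon> U)) (at U)) \<and>
        x \<epsilon> X (-1) = X \<and> xdot x \<epsilon> X (-1) = 0))"

definition vnet ::
  "(real^2 \<Rightarrow> real) \<Rightarrow> (real \<Rightarrow> real \<Rightarrow> real) \<Rightarrow> (real \<Rightarrow> real^2 \<Rightarrow> real \<Rightarrow> real^2)
     \<Rightarrow> real \<Rightarrow> real^2 \<Rightarrow> real \<Rightarrow> real \<Rightarrow> real" where
  "vnet f \<delta> x \<epsilon> X V U =
     V + oint (-\<epsilon>) U (\<lambda>s. f (x \<epsilon> X s) * \<delta> \<epsilon> s)
       + oint (-\<epsilon>) U (\<lambda>s. oint (-\<epsilon>) s (\<lambda>r.
            (\<Sum>i\<in>UNIV. partial f i (x \<epsilon> X r) * xdot x \<epsilon> X r $ i) * \<delta> \<epsilon> r))"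

text \<open>t_eps(U,X1,X2,V) = (U, x^1, x^2, v), coordinates of R^4 numbered 1..4.\<close>
definition tnet ::
  "(real^2 \<Rightarrow> real) \<Rightarrow> (real \<Rightarrow> real \<Rightarrow> real) \<Rightarrow> (real \<Rightarrow> real^2 \<Rightarrow> real \<Rightarrow> real^2)
     \<Rightarrow> real \<Rightarrow> real^4 \<Rightarrow> real^4" where
  "tnet f \<delta> x \<epsilon> p =
     (let U = p$1; X = (vector [p$2, p$3] :: real^2); V = p$4
      in vector [U, x \<epsilon> X U $ 1, x \<epsilon> X U $ 2, vnet f \<delta> x \<epsilon> X V U])"

text \<open>Principal minor of a square matrix for the index set S (Leibniz formula
  on S; det A = principal_minor A UNIV).\<close>
definition principal_minor :: "real^'n^'n \<Rightarrow> 'n set \<Rightarrow> real" where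
  "principal_minor A S = (\<Sum>p\<in>{p. p permutes S}. of_int (sign p) * (\<Prod>i\<in>S. A $ i $ p i))"

definition strictly_nonzero :: "(real \<Rightarrow> 'a \<Rightarrow> real) \<Rightarrow> 'a set \<Rightarrow> bool" where
  "strictly_nonzero u A \<longleftrightarrow>
     (\<exists>C>0. \<exists>N::nat. \<exists>\<epsilon>0\<in>{0<..1}. \<forall>\<epsilon>\<in>{0<..\<epsilon>0}. \<forall>y\<in>A. \<bar>u \<epsilon> y\<bar> \<ge> C * \<epsilon> ^ N)"

end

theory Submission
  imports Defs
begin


lemma deriv_bound:
  fixes g :: "real \<Rightarrow> real"
  assumes d: "\<And>t. a \<le> t \<Longrightarrow> t \<le> b \<Longrightarrow> (g has_real_derivative g' t) (at t)"
    and bd: "\<And>t. a < t \<Longrightarrow> t < b \<Longrightarrow> \<bar>g' t\<bar> \<le> M" and ab: "a \<le> b"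
  shows "\<bar>g b - g a\<bar> \<le> M * (b - a)"
proof (cases "a = b")
  case True then show ?thesis by simp
next
  case False
  with ab have "a < b" by simp
  from MVT2[OF this d] obtain z where z: "a < z" "z < b" "g b - g a = (b - a) * g' z" by blast
  have "\<bar>g b - g a\<bar> = (b - a) * \<bar>g' z\<bar>" using z \<open>a<b\<close> by (simp add: abs_mult)
  also have "\<dots> \<le> (b - a) * M" using bd[OF z(1,2)] \<open>a<b\<close> by (intro mult_left_mono) auto
  finally show ?thesis by (simp add: mult.commute)
qed

lemma sum2_le:
  fixes v :: "real^2"
  assumes "\<And>i. \<bar>v $ i\<bar> \<le> K"
  shows "norm v \<le> 2 * K"
proof -
  have "norm v \<le> (\<Sum>i\<in>UNIV. \<bar>v $ i\<bar>)" by (rule norm_le_l1_cart)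
  also have "\<dots> \<le> of_nat (card (UNIV::2 set)) * K" by (rule sum_bounded_above) (use assms in auto)
  finally show ?thesis by simp
qed

locale traj =
  fixes P :: "2 \<Rightarrow> real^2 \<Rightarrow> real" and w :: "real \<Rightarrow> real" and e C :: real
  assumes e_pos: "0 < e" and e_le: "e \<le> 1"
    and w_zero: "\<And>u. e < \<bar>u\<bar> \<Longrightarrow> w u = 0"
    and w_cont: "continuous_on UNIV w"
    and w_int: "integral UNIV (\<lambda>u. \<bar>w u\<bar>) \<le> C"
    and P_cont: "\<And>i. continuous_on UNIV (P i)"
begin

definition sol :: "(real \<Rightarrow> real^2) \<Rightarrow> (real \<Rightarrow> real^2) \<Rightarrow> real^2 \<Rightarrow> bool" where
  "sol y yd X \<longleftrightarrow> continuous_on UNIV y \<and>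
     (\<forall>s i. ((\<lambda>t. y t $ i) has_real_derivative yd s $ i) (at s)) \<and>
     (\<forall>s i. ((\<lambda>t. yd t $ i) has_real_derivative (1/2 * P i (y s) * w s)) (at s)) \<and>
     y (-1) = X \<and> yd (-1) = 0"

lemma absw_int: "(\<lambda>u. \<bar>w u\<bar>) integrable_on UNIV"
proof (rule integrable_on_superset)
  show "(\<lambda>u. \<bar>w u\<bar>) integrable_on {-1..1}"
    by (intro integrable_continuous_interval continuous_intros continuous_on_subset[OF w_cont]) auto
  show "\<And>x. x \<notin> {-1..1} \<Longrightarrow> \<bar>w x\<bar> = 0" using w_zero e_le by auto
qed auto

lemma int_le: "integral {a..b} (\<lambda>u. \<bar>w u\<bar>) \<le> C"
proof -
  have "integral {a..b} (\<lambda>u. \<bar>w u\<bar>) \<le> integral UNIV (\<lambda>u. \<bar>w u\<bar>)"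
    by (rule integral_subset_le) (auto intro!: absw_int integrable_continuous_interval
        continuous_intros continuous_on_subset[OF w_cont])
  then show ?thesis using w_int by linarith
qed

lemma C_nonneg: "0 \<le> C"
proof -
  have "0 \<le> integral {0..0} (\<lambda>u. \<bar>w u\<bar>)" by simp
  with int_le[of 0 0] show ?thesis by linarith
qed

lemma ftc_bound:
  fixes g :: "real \<Rightarrow> real"
  assumes d: "\<And>t. (g has_real_derivative (\<phi> t * w t)) (at t)"
    and c: "continuous_on UNIV \<phi>" and ab: "a \<le> b"
    and bd: "\<And>t. t \<in> {a..b} \<Longrightarrow> \<bar>\<phi> t\<bar> \<le> M"
  shows "\<bar>g b - g a\<bar> \<le> M * C"
proof -
  have hi: "((\<lambda>t. \<phi> t * w t) has_integral (g b - g a)) {a..b}"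
    using ab by (intro fundamental_theorem_of_calculus)
      (auto simp: has_real_derivative_iff_has_vector_derivative[symmetric]
            intro!: DERIV_subset[OF d])
  have M0: "0 \<le> M" using bd[of a] ab by force
  have "\<bar>g b - g a\<bar> = norm (integral {a..b} (\<lambda>t. \<phi> t * w t))"
    using hi by (simp add: integral_unique)
  also have "\<dots> \<le> integral {a..b} (\<lambda>t. M * \<bar>w t\<bar>)"
  proof (rule integral_norm_bound_integral)
    show "(\<lambda>t. \<phi> t * w t) integrable_on {a..b}" using hi by blast
    show "(\<lambda>t. M * \<bar>w t\<bar>) integrable_on {a..b}"
      by (auto intro!: integrable_continuous_interval continuous_intros continuous_on_subset[OF w_cont])
    fix t assume "t \<in> {a..b}"
    then show "norm (\<phi> t * w t) \<le> M * \<bar>w t\<bar>"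
      using bd[of t] by (simp add: abs_mult mult_right_mono)
  qed
  also have "\<dots> = M * integral {a..b} (\<lambda>t. \<bar>w t\<bar>)" by simp
  also have "\<dots> \<le> M * C" using int_le M0 by (intro mult_left_mono) auto
  finally show ?thesis .
qed

lemma sol_early:
  assumes "sol y yd X" "s \<le> -e"
  shows "yd s = 0 \<and> y s = X"
proof -
  from assms(1) have dy: "\<And>s i. ((\<lambda>t. y t $ i) has_real_derivative yd s $ i) (at s)"
    and dyd: "\<And>s i. ((\<lambda>t. yd t $ i) has_real_derivative (1/2 * P i (y s) * w s)) (at s)"
    and y0: "y (-1) = X" and yd0: "yd (-1) = 0" unfolding sol_def by auto
  have wz: "w t = 0" if "t < -e" for t using w_zero that e_pos by auto
  have ydz: "yd t $ i = 0" if "t \<le> -e" for t i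
  proof -
    have "\<bar>yd t $ i - yd (-1) $ i\<bar> \<le> 0 * (max t (-1) - min t (-1))"
    proof (cases "t \<le> -1")
      case True
      have "\<bar>yd (-1) $ i - yd t $ i\<bar> \<le> 0 * (-1 - t)"
        by (rule deriv_bound[OF dyd]) (use True wz e_le in auto)
      then show ?thesis using True by (simp add: abs_minus_commute)
    next
      case False
      have "\<bar>yd t $ i - yd (-1) $ i\<bar> \<le> 0 * (t - (-1))"
        by (rule deriv_bound[OF dyd]) (use False that wz in auto)
      then show ?thesis by simp
    qed
    then show ?thesis using yd0 by simp
  qed
  have "y s $ i = X $ i" for i
  proof -
    have "\<bar>y s $ i - y (-1) $ i\<bar> \<le> 0 * (max s (-1) - min s (-1))"
    proof (cases "s \<le> -1")
      case True
      have "\<bar>y (-1) $ i - y s $ i\<bar> \<le> 0 * (-1 - s)"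
        by (rule deriv_bound[OF dy]) (use True ydz e_le in auto)
      then show ?thesis using True by (simp add: abs_minus_commute)
    next
      case False
      have "\<bar>y s $ i - y (-1) $ i\<bar> \<le> 0 * (s - (-1))"
        by (rule deriv_bound[OF dy]) (use False assms(2) ydz in auto)
      then show ?thesis by simp
    qed
    then show ?thesis using y0 by simp
  qed
  then show ?thesis using ydz[OF assms(2)] by (auto simp: vec_eq_iff)
qed

lemma sol_facts:
  assumes "sol y yd X"
  shows "continuous_on UNIV y" "((\<lambda>t. y t $ i) has_real_derivative yd s $ i) (at s)"
    "((\<lambda>t. yd t $ i) has_real_derivative (1/2 * P i (y s) * w s)) (at s)"
  using assms unfolding sol_def by auto

lemma confine:
  assumes sol: "sol y yd X" and RX: "norm X \<le> R"
    and PG: "\<And>i p. norm p \<le> R + 1 \<Longrightarrow> \<bar>P i p\<bar> \<le> G"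
    and small: "G * C * (\<eta> + e) \<le> 1/4" and s: "s \<le> \<eta>"
  shows "norm (y s - X) \<le> 1/2"
proof (rule ccontr)
  assume nc: "\<not> ?thesis"
  note yc = sol_facts(1)[OF sol] and dy = sol_facts(2)[OF sol] and dyd = sol_facts(3)[OF sol]
  have "norm (0::real^2) \<le> R + 1" using RX norm_ge_zero[of X] by (simp del: norm_ge_zero)
  from PG[OF this, of 1] have G0: "0 \<le> G" by linarith
  have early: "s \<le> -e \<Longrightarrow> yd s = 0 \<and> y s = X" for s using sol_early[OF sol] by blast
  have "\<not> s \<le> -e" using nc early by auto
  define E where "E = {t\<in>{-e..\<eta>}. 1/2 \<le> norm (y t - X)}"
  have sE: "s \<in> E" using nc s \<open>\<not> s \<le> -e\<close> by (auto simp: E_def)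
  have clE: "closed E"
  proof -
    have "closed {t. 1/2 \<le> norm (y t - X)}"
      by (rule closed_Collect_le) (auto intro!: continuous_intros continuous_on_subset[OF yc])
    then have "closed ({-e..\<eta>} \<inter> {t. 1/2 \<le> norm (y t - X)})" by (intro closed_Int) auto
    then show ?thesis by (simp add: E_def Int_def)
  qed
  have bdd: "bdd_below E" unfolding E_def by (rule bdd_belowI[of _ "-e"]) auto
  define t0 where "t0 = Inf E"
  have t0E: "t0 \<in> E" unfolding t0_def using closed_contains_Inf[OF _ bdd clE] sE by blast
  have below: "norm (y t - X) < 1/2" if "-e \<le> t" "t < t0" for t
  proof (rule ccontr)
    assume "\<not> ?thesis"
    then have "t \<in> E" using that t0E by (auto simp: E_def)
    then have "t0 \<le> t" unfolding t0_def by (rule cInf_lower[OF _ bdd])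
    with that show False by simp
  qed
  have t0e: "-e < t0"
  proof -
    have "-e \<le> t0" using t0E by (auto simp: E_def)
    moreover have "t0 \<noteq> -e" using t0E early[of "-e"] by (auto simp: E_def)
    ultimately show ?thesis by simp
  qed
  have t0eta: "t0 \<le> \<eta>" using t0E by (auto simp: E_def)
  have ydb: "\<bar>yd t $ i\<bar> \<le> 1/2 * G * C" if "-e < t" "t < t0" for t i
  proof -
    have "\<bar>yd t $ i - yd (-e) $ i\<bar> \<le> (1/2 * G) * C"
    proof (rule ftc_bound[where \<phi>="\<lambda>r. 1/2 * P i (y r)" and g="\<lambda>t. yd t $ i"])
      show "\<And>r. ((\<lambda>t. yd t $ i) has_real_derivative 1/2 * P i (y r) * w r) (at r)" by (rule dyd)
      show "continuous_on UNIV (\<lambda>r. 1/2 * P i (y r))"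
        by (intro continuous_intros continuous_on_compose2[OF P_cont yc]) auto
      show "-e \<le> t" using that by simp
      fix r assume r: "r \<in> {-e..t}"
      have "norm (y r) \<le> norm X + norm (y r - X)" by (rule norm_triangle_sub)
      also have "\<dots> \<le> R + 1" using below[of r] r that RX by auto
      finally show "\<bar>1/2 * P i (y r)\<bar> \<le> 1/2 * G" using PG[of "y r" i] by simp
    qed
    then show ?thesis using early[of "-e"] by simp
  qed
  have yb: "\<bar>y t0 $ i - y (-e) $ i\<bar> \<le> (1/2 * G * C) * (t0 - (-e))" for i
    by (rule deriv_bound[OF dy ydb]) (use t0e in auto)
  have "\<bar>(y t0 - X) $ i\<bar> \<le> 1/8" for i
  proof -
    have "(1/2 * G * C) * (t0 - (-e)) \<le> (1/2 * G * C) * (\<eta> + e)"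
      using t0eta G0 C_nonneg by (intro mult_left_mono) auto
    also have "\<dots> = (G * C * (\<eta> + e)) / 2" by simp
    also have "\<dots> \<le> 1/8" using small by linarith
    finally have A: "(1/2 * G * C) * (t0 - (-e)) \<le> 1/8" .
    have "\<bar>(y t0 - X) $ i\<bar> = \<bar>y t0 $ i - y (-e) $ i\<bar>" using early[of "-e"] by simp
    then show ?thesis using yb[of i] A by linarith
  qed
  then have "norm (y t0 - X) \<le> 2 * (1/8)" by (intro sum2_le)
  with t0E show False by (auto simp: E_def)
qed

lemma lip:
  assumes soly: "sol y yd X" and solz: "sol z zd Y"
    and conf: "\<And>s. s \<in> {-e..\<eta>} \<Longrightarrow> norm (y s) \<le> Rb \<and> norm (z s) \<le> Rb"
    and lipP: "\<And>i p q. norm p \<le> Rb \<Longrightarrow> norm q \<le> Rb \<Longrightarrow> \<bar>P i p - P i q\<bar> \<le> L * norm (p - q)"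
    and L0: "0 \<le> L" and eta: "0 \<le> \<eta>" and small: "L * C * (\<eta> + e) \<le> c" and c: "c \<le> 1/2"
    and s: "s \<le> \<eta>"
  shows "\<bar>(z s - y s) $ i - (Y - X) $ i\<bar> \<le> c * norm (Y - X)"
proof (cases "s \<le> -e")
  case True
  show ?thesis
  proof -
    have "0 \<le> L * C * (\<eta> + e)" using L0 C_nonneg eta e_pos by simp
    then have "0 \<le> c" using small by linarith
    then show ?thesis using sol_early[OF soly True] sol_early[OF solz True] by simp
  qed
next
  case False
  note yc = sol_facts(1)[OF soly] and dy = sol_facts(2)[OF soly] and dyd = sol_facts(3)[OF soly]
  note zc = sol_facts(1)[OF solz] and dz = sol_facts(2)[OF solz] and dzd = sol_facts(3)[OF solz]
  have "0 \<le> L * C * (\<eta> + e)" using L0 C_nonneg eta e_pos by simp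
  then have c0: "0 \<le> c" using small by linarith
  have cont: "continuous_on {-e..\<eta>} (\<lambda>t. norm (z t - y t))"
    by (intro continuous_intros continuous_on_subset[OF yc] continuous_on_subset[OF zc]) auto
  obtain t1 where t1: "t1 \<in> {-e..\<eta>}" and mx: "\<And>t. t \<in> {-e..\<eta>} \<Longrightarrow> norm (z t - y t) \<le> norm (z t1 - y t1)"
  proof -
    have "{-e..\<eta>} \<noteq> {}" using eta e_pos by simp
    from continuous_attains_sup[OF compact_Icc this cont] show ?thesis using that by blast
  qed
  define m where "m = norm (z t1 - y t1)"
  have m0: "0 \<le> m" by (simp add: m_def)
  have db: "\<bar>(zd r - yd r) $ i\<bar> \<le> (1/2 * L * m) * C" if r: "r \<in> {-e..\<eta>}" for r i
  proof -
    have "\<bar>(zd r - yd r) $ i - (zd (-e) - yd (-e)) $ i\<bar> \<le> (1/2 * L * m) * C"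
    proof (rule ftc_bound[where \<phi>="\<lambda>r. 1/2 * (P i (z r) - P i (y r))" and g="\<lambda>t. (zd t - yd t) $ i"])
      fix t
      show "((\<lambda>t. (zd t - yd t) $ i) has_real_derivative 1/2 * (P i (z t) - P i (y t)) * w t) (at t)"
        using DERIV_diff[OF dzd[of i t] dyd[of i t]] by (simp add: algebra_simps)
    next
      show "continuous_on UNIV (\<lambda>r. 1/2 * (P i (z r) - P i (y r)))"
        by (intro continuous_intros continuous_on_compose2[OF P_cont yc]
            continuous_on_compose2[OF P_cont zc]) auto
      show "-e \<le> r" using r by simp
      fix t assume t: "t \<in> {-e..r}"
      then have tt: "t \<in> {-e..\<eta>}" using r by auto
      have "\<bar>P i (z t) - P i (y t)\<bar> \<le> L * norm (z t - y t)" using lipP conf[OF tt] by blast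
      also have "\<dots> \<le> L * m" using mx[OF tt] L0 by (simp add: m_def mult_left_mono)
      finally show "\<bar>1/2 * (P i (z t) - P i (y t))\<bar> \<le> 1/2 * L * m" by simp
    qed
    then show ?thesis using sol_early[OF soly, of "-e"] sol_early[OF solz, of "-e"] by simp
  qed
  have key: "\<bar>(z t - y t) $ i - (Y - X) $ i\<bar> \<le> c * m / 2" if t: "t \<in> {-e..\<eta>}" for t i
  proof -
    have "\<bar>(z t - y t) $ i - (z (-e) - y (-e)) $ i\<bar> \<le> ((1/2 * L * m) * C) * (t - (-e))"
    proof (rule deriv_bound)
      fix r show "((\<lambda>t. (z t - y t) $ i) has_real_derivative (zd r - yd r) $ i) (at r)"
        using DERIV_diff[OF dz[of i r] dy[of i r]] by simp
    next
      fix r assume "-e < r" "r < t" then show "\<bar>(zd r - yd r) $ i\<bar> \<le> 1/2 * L * m * C"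
        using db[of r i] t by auto
    qed (use t in auto)
    also have "\<dots> \<le> ((1/2 * L * m) * C) * (\<eta> + e)"
      using t L0 m0 C_nonneg by (intro mult_left_mono) auto
    also have "\<dots> = (L * C * (\<eta> + e)) * m / 2" by simp
    also have "\<dots> \<le> c * m / 2" using small m0 by (simp add: mult_right_mono divide_right_mono)
    finally show ?thesis using sol_early[OF soly, of "-e"] sol_early[OF solz, of "-e"] by simp
  qed
  have "norm ((z t1 - y t1) - (Y - X)) \<le> 2 * (c * m / 2)"
  proof (rule sum2_le)
    fix i show "\<bar>(z t1 - y t1 - (Y - X)) $ i\<bar> \<le> c * m / 2" using key[OF t1, of i] by simp
  qed
  moreover have "m - norm (Y - X) \<le> norm ((z t1 - y t1) - (Y - X))"
    unfolding m_def by (rule norm_triangle_ineq2)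
  ultimately have A: "m \<le> norm (Y - X) + c * m" by linarith
  have "c * m \<le> 1/2 * m" using c m0 by (rule mult_right_mono)
  with A have "m \<le> 2 * norm (Y - X)" by linarith
  then have "c * m \<le> c * (2 * norm (Y - X))" using c0 by (rule mult_left_mono)
  then have "c * m / 2 \<le> c * norm (Y - X)" by simp
  moreover have "s \<in> {-e..\<eta>}" using False s by auto
  then have "\<bar>(z s - y s) $ i - (Y - X) $ i\<bar> \<le> c * m / 2" by (rule key)
  ultimately show ?thesis by linarith
qed

end


abbreviation "C1 \<equiv> Ck (Suc 0)"

lemma C1_iff: "C1 g \<longleftrightarrow> (\<forall>x. g differentiable (at x)) \<and> (\<forall>v. continuous_on UNIV (\<lambda>x. frechet_derivative g (at x) v))"
  by simp

lemma C1_deriv: "C1 g \<Longrightarrow> (g has_derivative frechet_derivative g (at x)) (at x)"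
  by (simp add: frechet_derivative_works[symmetric])

lemma C1_cont: "C1 g \<Longrightarrow> continuous_on UNIV g"
  by (auto intro!: differentiable_imp_continuous_on differentiable_at_imp_differentiable_on)

lemma C1_linear: assumes "bounded_linear l" shows "C1 l"
proof -
  have "frechet_derivative l (at x) = l" for x
    using frechet_derivative_at[OF bounded_linear_imp_has_derivative[OF assms]] by simp
  then show ?thesis using bounded_linear_imp_differentiable[OF assms] by simp
qed

lemma C1_const: "C1 (\<lambda>x. c)"
proof -
  have "frechet_derivative (\<lambda>x. c) (at x) = (\<lambda>v. 0)" for x
    using frechet_derivative_at[OF has_derivative_const] by simp
  then show ?thesis by simp
qed

lemma lin_rep:
  fixes f' :: "'b::euclidean_space \<Rightarrow> real"
  assumes "bounded_linear f'"
  shows "f' w = (\<Sum>b\<in>Basis. (w \<bullet> b) * f' b)"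
proof -
  interpret bounded_linear f' by fact
  have "f' w = f' (\<Sum>b\<in>Basis. (w \<bullet> b) *\<^sub>R b)" by (simp add: euclidean_representation)
  also have "\<dots> = (\<Sum>b\<in>Basis. (w \<bullet> b) * f' b)" by (simp add: sum scale)
  finally show ?thesis .
qed

lemma C1_comp:
  fixes f :: "'b::euclidean_space \<Rightarrow> real" and y :: "'a::euclidean_space \<Rightarrow> 'b"
  assumes f: "C1 f" and y: "C1 y"
  shows "C1 (\<lambda>q. f (y q))"
proof -
  have hd: "((\<lambda>q. f (y q)) has_derivative (\<lambda>v. frechet_derivative f (at (y q)) (frechet_derivative y (at q) v))) (at q)" for q
    using diff_chain_at[OF C1_deriv[OF y] C1_deriv[OF f]] by (simp add: o_def)
  have fd: "frechet_derivative (\<lambda>q. f (y q)) (at q) v = (\<Sum>b\<in>Basis. (frechet_derivative y (at q) v \<bullet> b) * frechet_derivative f (at (y q)) b)" for q v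
  proof -
    have "frechet_derivative (\<lambda>q. f (y q)) (at q) = (\<lambda>v. frechet_derivative f (at (y q)) (frechet_derivative y (at q) v))"
      using frechet_derivative_at[OF hd] by simp
    moreover have "bounded_linear (frechet_derivative f (at (y q)))"
      using C1_deriv[OF f] by (rule has_derivative_bounded_linear)
    ultimately show ?thesis using lin_rep by simp
  qed
  have cf: "continuous_on UNIV (\<lambda>p. frechet_derivative f (at p) b)" for b using f by simp
  have cy: "continuous_on UNIV (\<lambda>q. frechet_derivative y (at q) v)" for v using y by simp
  show ?thesis
    using hd
    by (auto simp: fd differentiable_def intro!: continuous_intros continuous_on_compose2[OF cf C1_cont[OF y]] cy)
qed

lemma C1_add:
  fixes f g :: "'a::euclidean_space \<Rightarrow> real"
  assumes f: "C1 f" and g: "C1 g" shows "C1 (\<lambda>x. f x + g x)"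
proof -
  have hd: "((\<lambda>x. f x + g x) has_derivative (\<lambda>v. frechet_derivative f (at x) v + frechet_derivative g (at x) v)) (at x)" for x
    by (intro has_derivative_add C1_deriv f g)
  have "frechet_derivative (\<lambda>x. f x + g x) (at x) v = frechet_derivative f (at x) v + frechet_derivative g (at x) v" for x v
    using fun_cong[OF frechet_derivative_at[OF hd[of x]], of v] by simp
  then show ?thesis using hd f g by (auto simp: differentiable_def intro!: continuous_intros)
qed

lemma C1_mult:
  fixes f g :: "'a::euclidean_space \<Rightarrow> real"
  assumes f: "C1 f" and g: "C1 g" shows "C1 (\<lambda>x. f x * g x)"
proof -
  have hd: "((\<lambda>x. f x * g x) has_derivative (\<lambda>v. f x * frechet_derivative g (at x) v + frechet_derivative f (at x) v * g x)) (at x)" for x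
    by (intro has_derivative_mult C1_deriv f g)
  have "frechet_derivative (\<lambda>x. f x * g x) (at x) v = f x * frechet_derivative g (at x) v + frechet_derivative f (at x) v * g x" for x v
    using fun_cong[OF frechet_derivative_at[OF hd[of x]], of v] by simp
  then show ?thesis using hd f g C1_cont[OF f] C1_cont[OF g]
    by (auto simp: differentiable_def intro!: continuous_intros)
qed

lemma C1_sum:
  fixes F :: "'i \<Rightarrow> 'a::euclidean_space \<Rightarrow> real"
  assumes "finite I" "\<And>i. i \<in> I \<Longrightarrow> C1 (F i)" shows "C1 (\<lambda>x. \<Sum>i\<in>I. F i x)"
  using assms
proof (induction I rule: finite_induct)
  case empty then show ?case using C1_const[of 0] by simp
next
  case (insert a I)
  have "C1 (\<lambda>x. F a x + (\<Sum>i\<in>I. F i x))" using insert by (intro C1_add) auto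
  then show ?case using insert by simp
qed

lemma C1_nth:
  fixes y :: "'a::euclidean_space \<Rightarrow> real^'n"
  assumes "C1 y" shows "C1 (\<lambda>q. y q $ i)"
  using C1_comp[OF C1_linear[OF bounded_linear_vec_nth] assms] .

lemma C1_dir:
  assumes "Ck (Suc (Suc 0)) g" shows "C1 (\<lambda>x. frechet_derivative g (at x) v)"
  using assms by simp

lemma smooth_Ck: "smooth g \<Longrightarrow> Ck k g" by (simp add: smooth_def)

lemma oint_deriv:
  assumes h: "continuous_on UNIV h"
  shows "((\<lambda>U. oint a U h) has_real_derivative h U0) (at U0)"
proof -
  define c where "c = min a U0 - 1"
  define b where "b = max a U0 + 1"
  have int: "h integrable_on {p..q}" for p q by (rule integrable_continuous_interval) (rule continuous_on_subset[OF h], simp)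
  have eq: "oint a U h = integral {c..U} h - integral {c..a} h" if "U \<in> {c<..<b}" for U
  proof (cases "a \<le> U")
    case True
    have "integral {c..a} h + integral {a..U} h = integral {c..U} h"
      using True c_def by (intro Henstock_Kurzweil_Integration.integral_combine int) auto
    then show ?thesis using True by (simp add: oint_def)
  next
    case False
    have "integral {c..U} h + integral {U..a} h = integral {c..a} h"
      using False that c_def by (intro Henstock_Kurzweil_Integration.integral_combine int) auto
    then show ?thesis using False by (simp add: oint_def)
  qed
  have "((\<lambda>u. integral {c..u} h) has_vector_derivative h U0) (at U0 within {c..b})"
    by (rule integral_has_vector_derivative) (auto intro: continuous_on_subset[OF h] simp: c_def b_def)
  then have "((\<lambda>u. integral {c..u} h) has_vector_derivative h U0) (at U0 within {c<..<b})"
    by (rule has_vector_derivative_within_subset) auto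
  then have "((\<lambda>u. integral {c..u} h) has_vector_derivative h U0) (at U0)"
    by (subst (asm) at_within_open) (auto simp: c_def b_def)
  then have "((\<lambda>u. integral {c..u} h - integral {c..a} h) has_real_derivative h U0) (at U0)"
    by (auto simp: has_real_derivative_iff_has_vector_derivative[symmetric] intro!: derivative_eq_intros)
  then show ?thesis
    by (rule has_field_derivative_transform_within_open[where S="{c<..<b}"]) (auto simp: eq c_def b_def)
qed

lemma Phi_diff:
  fixes g :: "(real^2) \<times> real \<Rightarrow> real"
  assumes g: "C1 g"
  shows "(\<lambda>q. oint a (snd q) (\<lambda>s. g (fst q, s))) differentiable (at q0)"
proof -
  obtain X0 U0 where q0: "q0 = (X0, U0)" by fastforce
  define F where "F X U = oint a U (\<lambda>s. g (X, s))" for X U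
  define fx where "fx X t = Blinfun (\<lambda>v. frechet_derivative g (at (X, t)) (v, 0))" for X t
  have blin: "bounded_linear (\<lambda>v::real^2. frechet_derivative g (at q) (v, 0))" for q
  proof -
    have "bounded_linear (frechet_derivative g (at q))" using C1_deriv[OF g] by (rule has_derivative_bounded_linear)
    then show ?thesis by (rule bounded_linear_compose) (auto intro: bounded_linear_Pair bounded_linear_ident bounded_linear_zero)
  qed
  have fxd: "((\<lambda>X. g (X, t)) has_derivative blinfun_apply (fx X t)) (at X within UNIV)" for X t
  proof -
    have "((\<lambda>X. (X, t)) has_derivative (\<lambda>v. (v, 0))) (at X)"
      by (auto intro!: derivative_eq_intros)
    from diff_chain_at[OF this C1_deriv[OF g]]
    show ?thesis by (simp add: fx_def bounded_linear_Blinfun_apply[OF blin] o_def)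
  qed
  have cfx: "continuous_on (UNIV \<times> S) (\<lambda>(X, t). fx X t)" for S
  proof (rule continuous_on_blinfun_componentwise)
    fix i :: "real^2" assume "i \<in> Basis"
    have "continuous_on UNIV (\<lambda>q. frechet_derivative g (at q) (i, 0))" using g by simp
    then have "continuous_on (UNIV \<times> S) (\<lambda>q. frechet_derivative g (at q) (i, 0))" by (rule continuous_on_subset) auto
    then show "continuous_on (UNIV \<times> S) (\<lambda>x. blinfun_apply (case x of (X, t) \<Rightarrow> fx X t) i)"
      by (simp add: fx_def bounded_linear_Blinfun_apply[OF blin] split_beta')
  qed
  have gc: "continuous_on UNIV g" by (rule C1_cont[OF g])
  have intg: "(\<lambda>s. g (X, s)) integrable_on cbox p q" for X p q
    by (simp only: cbox_interval, rule integrable_continuous_interval)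
      (auto intro!: continuous_on_compose2[OF gc] continuous_intros)
  have "\<exists>D. ((\<lambda>X. F X U0) has_derivative D) (at X0)"
  proof (cases "a \<le> U0")
    case True
    have "((\<lambda>X. integral (cbox a U0) (\<lambda>s. g (X, s))) has_derivative integral (cbox a U0) (fx X0)) (at X0 within UNIV)"
      by (rule leibniz_rule[OF fxd intg cfx]) auto
    moreover have "F X U0 = integral (cbox a U0) (\<lambda>s. g (X, s))" for X
      using True by (simp add: F_def oint_def cbox_interval)
    ultimately show ?thesis by auto
  next
    case False
    have "((\<lambda>X. integral (cbox U0 a) (\<lambda>s. g (X, s))) has_derivative integral (cbox U0 a) (fx X0)) (at X0 within UNIV)"
      by (rule leibniz_rule[OF fxd intg cfx]) auto
    then have "((\<lambda>X. - integral (cbox U0 a) (\<lambda>s. g (X, s))) has_derivative (\<lambda>v. - integral (cbox U0 a) (fx X0) v)) (at X0)"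
      by (intro has_derivative_minus) auto
    moreover have "F X U0 = - integral (cbox U0 a) (\<lambda>s. g (X, s))" for X
      using False by (simp add: F_def oint_def cbox_interval)
    ultimately show ?thesis by auto
  qed
  then obtain D where D: "((\<lambda>X. F X U0) has_derivative D) (at X0 within UNIV)" by auto
  have fy: "((\<lambda>U. F X U) has_derivative blinfun_apply (blinfun_scaleR_left (g (X, U)))) (at U within UNIV)" for X U
  proof -
    have "((\<lambda>U. F X U) has_real_derivative g (X, U)) (at U)"
      unfolding F_def by (rule oint_deriv) (auto intro!: continuous_on_compose2[OF gc] continuous_intros)
    then have "((\<lambda>U. F X U) has_derivative (\<lambda>t. g (X, U) * t)) (at U)"
      by (rule has_field_derivative_imp_has_derivative)
    moreover have "blinfun_apply (blinfun_scaleR_left (g (X, U))) = (\<lambda>t. g (X, U) * t)"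
      by (auto simp: blinfun_scaleR_left.rep_eq)
    ultimately show ?thesis by simp
  qed
  have fyc: "continuous (at (X0, U0) within UNIV \<times> UNIV) (\<lambda>(X, U). blinfun_scaleR_left (g (X, U)))"
  proof -
    have "continuous (at (X0, U0)) g" using gc by (simp add: continuous_on_eq_continuous_at)
    then have "continuous (at (X0, U0)) (\<lambda>q. blinfun_scaleR_left (g q))"
      by (rule bounded_linear.continuous[OF bounded_linear_blinfun_scaleR_left])
    then show ?thesis by (simp add: split_beta')
  qed
  have "((\<lambda>(X, U). F X U) has_derivative (\<lambda>(tx, ty). D tx + blinfun_scaleR_left (g (X0, U0)) ty)) (at (X0, U0) within UNIV \<times> UNIV)"
    by (rule has_derivative_partialsI[OF D fy fyc]) auto
  then have "(\<lambda>(X, U). F X U) differentiable (at q0)" by (auto simp: differentiable_def q0)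
  moreover have "(\<lambda>(X, U). F X U) = (\<lambda>q. oint a (snd q) (\<lambda>s. g (fst q, s)))"
    by (auto simp: F_def)
  ultimately show ?thesis by simp
qed


lemma vector_4:
 "(vector [a,b,c,d] :: ('a::zero)^4) $ 1 = a"
 "(vector [a,b,c,d] :: ('a::zero)^4) $ 2 = b"
 "(vector [a,b,c,d] :: ('a::zero)^4) $ 3 = c"
 "(vector [a,b,c,d] :: ('a::zero)^4) $ 4 = d"
  unfolding vector_def by simp_all

lemma oint_same[simp]: "oint a a k = 0" by (simp add: oint_def)

lemma oint_cont: "continuous_on UNIV k \<Longrightarrow> continuous_on UNIV (\<lambda>s. oint a s k)"
  by (rule continuous_at_imp_continuous_on) (auto intro!: DERIV_isCont oint_deriv)

lemma oint_double:
  assumes k: "continuous_on UNIV k"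
  shows "oint a U (\<lambda>s. oint a s k) = U * oint a U k - oint a U (\<lambda>r. r * k r)"
proof -
  define D where "D U = oint a U (\<lambda>s. oint a s k) - (U * oint a U k - oint a U (\<lambda>r. r * k r))" for U
  have kc: "continuous_on UNIV (\<lambda>r. r * k r)" by (intro continuous_intros k)
  have dD: "(D has_real_derivative 0) (at t)" for t
  proof -
    have m: "((\<lambda>z. z * oint a z k) has_real_derivative 1 * oint a t k + k t * t) (at t)"
      by (rule DERIV_mult[OF DERIV_ident oint_deriv[OF k]])
    have "(D has_real_derivative (oint a t k - ((1 * oint a t k + k t * t) - t * k t))) (at t)"
      unfolding D_def
      by (intro DERIV_diff m oint_deriv oint_cont k kc)
    then show ?thesis by simp
  qed
  have "\<bar>D (max U a) - D (min U a)\<bar> \<le> 0 * (max U a - min U a)"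
    by (rule deriv_bound[OF dD]) auto
  then have "D U = D a" by (cases "U \<le> a") (auto simp: max_def min_def)
  then show ?thesis by (simp add: D_def)
qed

definition xx :: "(real \<Rightarrow> real^2 \<Rightarrow> real \<Rightarrow> real^2) \<Rightarrow> real \<Rightarrow> (real^2) \<times> real \<Rightarrow> real^2" where
  "xx x \<epsilon> q = x \<epsilon> (fst q) (snd q)"

lemma xdot_vd:
  assumes "smooth (xx x \<epsilon>)"
  shows "((\<lambda>s. x \<epsilon> X s) has_vector_derivative frechet_derivative (xx x \<epsilon>) (at (X, r)) (0, 1)) (at r)"
    and "xdot x \<epsilon> X r = frechet_derivative (xx x \<epsilon>) (at (X, r)) (0, 1)"
proof -
  have C: "C1 (xx x \<epsilon>)" using smooth_Ck[OF assms] .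
  let ?D = "frechet_derivative (xx x \<epsilon>) (at (X, r))"
  have bl: "bounded_linear ?D" using C1_deriv[OF C] by (rule has_derivative_bounded_linear)
  have "((\<lambda>s. (X, s)) has_derivative (\<lambda>h. (0, h))) (at r)" by (auto intro!: derivative_eq_intros)
  from diff_chain_at[OF this C1_deriv[OF C]]
  have "((\<lambda>s. x \<epsilon> X s) has_derivative (\<lambda>h. ?D (0, h))) (at r)" by (simp add: o_def xx_def)
  moreover have "(\<lambda>h. ?D (0, h)) = (\<lambda>h. h *\<^sub>R ?D (0, 1))"
  proof
    fix h :: real
    interpret bounded_linear ?D by (rule bl)
    have "?D (0, h) = ?D (h *\<^sub>R (0, 1))" by simp
    also have "\<dots> = h *\<^sub>R ?D (0, 1)" by (rule scale)
    finally show "?D (0, h) = h *\<^sub>R ?D (0, 1)" .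
  qed
  ultimately show vd: "((\<lambda>s. x \<epsilon> X s) has_vector_derivative ?D (0, 1)) (at r)"
    unfolding has_vector_derivative_def by simp
  then show "xdot x \<epsilon> X r = ?D (0, 1)" unfolding xdot_def by (rule vector_derivative_at)
qed

definition Lp :: "real^4 \<Rightarrow> (real^2) \<times> real" where
  "Lp p = (vector [p$2, p$3], p$1)"

lemma Lp_bl: "bounded_linear Lp"
proof -
  have "linear (\<lambda>p::real^4. (vector [p$2, p$3] :: real^2))"
    by (rule linearI) (auto simp: vec_eq_iff forall_2)
  then have "bounded_linear (\<lambda>p::real^4. (vector [p$2, p$3] :: real^2))"
    by (simp add: linear_conv_bounded_linear)
  then show ?thesis unfolding Lp_def
    by (intro bounded_linear_Pair bounded_linear_vec_nth)
qed

lemma Phi_comp_diff: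
  fixes g :: "(real^2) \<times> real \<Rightarrow> real" and p :: "real^4"
  assumes "C1 g"
  shows "(\<lambda>p. oint a (p$1) (\<lambda>s. g (vector [p$2, p$3], s))) differentiable (at p)"
proof -
  have "((\<lambda>q. oint a (snd q) (\<lambda>s. g (fst q, s))) \<circ> Lp) differentiable (at p)"
    by (rule differentiable_chain_at[OF bounded_linear_imp_differentiable[OF Lp_bl] Phi_diff[OF assms]])
  then show ?thesis by (simp add: o_def Lp_def)
qed

lemma C1_comp_diff:
  fixes g :: "(real^2) \<times> real \<Rightarrow> real" and p :: "real^4"
  assumes "C1 g"
  shows "(\<lambda>p. g (vector [p$2, p$3], p$1)) differentiable (at p)"
proof -
  have "(g \<circ> Lp) differentiable (at p)"
    by (rule differentiable_chain_at[OF bounded_linear_imp_differentiable[OF Lp_bl]])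
      (use assms in \<open>simp only: C1_iff\<close>)
  then show ?thesis by (simp add: o_def Lp_def)
qed

lemma tnet_diff:
  assumes f: "smooth f" and d: "smooth (\<delta> \<epsilon>)" and xs: "smooth (xx x \<epsilon>)"
  shows "tnet f \<delta> x \<epsilon> differentiable (at p)"
proof -
  have Cx: "C1 (xx x \<epsilon>)" by (rule smooth_Ck[OF xs])
  have Cf: "C1 f" by (rule smooth_Ck[OF f])
  have Cd: "C1 (\<lambda>q::(real^2)\<times>real. \<delta> \<epsilon> (snd q))"
    by (rule C1_comp[OF smooth_Ck[OF d] C1_linear[OF bounded_linear_snd]])
  define g1 where "g1 q = f (xx x \<epsilon> q) * \<delta> \<epsilon> (snd q)" for q
  define h where "h q = (\<Sum>i\<in>UNIV. partial f i (xx x \<epsilon> q) * frechet_derivative (xx x \<epsilon>) (at q) (0, 1) $ i) * \<delta> \<epsilon> (snd q)" for q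
  define g3 where "g3 q = snd q * h q" for q
  have Cg1: "C1 g1" unfolding g1_def by (intro C1_mult C1_comp[OF Cf Cx] Cd)
  have Cpf: "C1 (\<lambda>q. partial f i (xx x \<epsilon> q))" for i
  proof -
    have "C1 (\<lambda>p. frechet_derivative f (at p) (axis i 1))" by (rule C1_dir[OF smooth_Ck[OF f]])
    then show ?thesis unfolding partial_def by (rule C1_comp[OF _ Cx])
  qed
  have Cxd: "C1 (\<lambda>q. frechet_derivative (xx x \<epsilon>) (at q) (0, 1) $ i)" for i
    by (rule C1_nth[OF C1_dir[OF smooth_Ck[OF xs]]])
  have Ch: "C1 h" unfolding h_def by (intro C1_mult C1_sum Cpf Cxd Cd) auto
  have Cg3: "C1 g3" unfolding g3_def by (intro C1_mult Ch C1_linear[OF bounded_linear_snd])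
  have hc: "continuous_on UNIV (\<lambda>s. h (X, s))" for X
    by (rule continuous_on_compose2[OF C1_cont[OF Ch]]) (auto intro!: continuous_intros)
  have veq: "vnet f \<delta> x \<epsilon> X V U = V + oint (-\<epsilon>) U (\<lambda>s. g1 (X, s)) + U * oint (-\<epsilon>) U (\<lambda>s. h (X, s))
      - oint (-\<epsilon>) U (\<lambda>s. g3 (X, s))" for X V U
  proof -
    have "(\<lambda>r. (\<Sum>i\<in>UNIV. partial f i (x \<epsilon> X r) * xdot x \<epsilon> X r $ i) * \<delta> \<epsilon> r) = (\<lambda>r. h (X, r))"
      by (auto simp: h_def xdot_vd(2)[OF xs] xx_def)
    moreover have "(\<lambda>s. f (x \<epsilon> X s) * \<delta> \<epsilon> s) = (\<lambda>s. g1 (X, s))" by (auto simp: g1_def xx_def)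
    moreover have "(\<lambda>s. g3 (X, s)) = (\<lambda>r. r * h (X, r))" by (auto simp: g3_def)
    ultimately show ?thesis unfolding vnet_def using oint_double[OF hc[of X], of "-\<epsilon>" U] by simp
  qed
  have teq: "tnet f \<delta> x \<epsilon> = (\<lambda>p. (p$1) *\<^sub>R axis 1 1 + (xx x \<epsilon> (vector [p$2, p$3], p$1) $ 1) *\<^sub>R axis 2 1
       + (xx x \<epsilon> (vector [p$2, p$3], p$1) $ 2) *\<^sub>R axis 3 1
       + (p$4 + oint (-\<epsilon>) (p$1) (\<lambda>s. g1 (vector [p$2, p$3], s)) + p$1 * oint (-\<epsilon>) (p$1) (\<lambda>s. h (vector [p$2, p$3], s))
          - oint (-\<epsilon>) (p$1) (\<lambda>s. g3 (vector [p$2, p$3], s))) *\<^sub>R axis 4 1)"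
    by (auto simp: fun_eq_iff tnet_def vec_eq_iff forall_4 vector_4 axis_def veq xx_def Let_def)
  have d1: "(\<lambda>p::real^4. xx x \<epsilon> (vector [p$2, p$3], p$1) $ i) differentiable (at p)" for i
    by (rule C1_comp_diff[OF C1_nth[OF Cx]])
  have p1: "(\<lambda>p::real^4. p$j) differentiable (at p)" for j
    by (rule bounded_linear_imp_differentiable[OF bounded_linear_vec_nth])
  have e1: "(\<lambda>p::real^4. oint (-\<epsilon>) (p$1) (\<lambda>s. g1 (vector [p$2, p$3], s))) differentiable (at p)"
    by (rule Phi_comp_diff[OF Cg1])
  have e2: "(\<lambda>p::real^4. oint (-\<epsilon>) (p$1) (\<lambda>s. h (vector [p$2, p$3], s))) differentiable (at p)"
    by (rule Phi_comp_diff[OF Ch])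
  have e3: "(\<lambda>p::real^4. oint (-\<epsilon>) (p$1) (\<lambda>s. g3 (vector [p$2, p$3], s))) differentiable (at p)"
    by (rule Phi_comp_diff[OF Cg3])
  have c4: "(\<lambda>p::real^4. p$4 + oint (-\<epsilon>) (p$1) (\<lambda>s. g1 (vector [p$2, p$3], s)) + p$1 * oint (-\<epsilon>) (p$1) (\<lambda>s. h (vector [p$2, p$3], s))
          - oint (-\<epsilon>) (p$1) (\<lambda>s. g3 (vector [p$2, p$3], s))) differentiable (at p)"
    by (rule differentiable_diff[OF differentiable_add[OF differentiable_add[OF p1 e1] differentiable_mult[OF p1 e2]] e3])
  have "(\<lambda>p::real^4. (p$1) *\<^sub>R axis 1 1 + (xx x \<epsilon> (vector [p$2, p$3], p$1) $ 1) *\<^sub>R (axis 2 1::real^4)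
       + (xx x \<epsilon> (vector [p$2, p$3], p$1) $ 2) *\<^sub>R axis 3 1
       + (p$4 + oint (-\<epsilon>) (p$1) (\<lambda>s. g1 (vector [p$2, p$3], s)) + p$1 * oint (-\<epsilon>) (p$1) (\<lambda>s. h (vector [p$2, p$3], s))
          - oint (-\<epsilon>) (p$1) (\<lambda>s. g3 (vector [p$2, p$3], s))) *\<^sub>R axis 4 1) differentiable (at p)"
    by (rule differentiable_add[OF differentiable_add[OF differentiable_add]];
        rule differentiable_scaleR[OF _ differentiable_const]; rule p1 d1 c4)
  then show ?thesis unfolding teq .
qed


lemma poly_bounds:
  fixes c :: real
  assumes c0: "0 \<le> c" and c1: "c \<le> 1/10"
  shows "(1 + c)^4 \<le> 1 + 47/10 * c" "1 - 4 * c \<le> (1 - c)^4" "c^2 * (1 + c)^4 \<le> c * (3/20)"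
proof -
  have q2: "c * c \<le> c / 10" using mult_left_mono[OF c1 c0] by simp
  have q3: "c * c * c \<le> c / 100" using mult_left_mono[OF q2, of c] c0 mult_left_mono[OF c1 c0] by (simp add: mult_ac)
  have q4: "c * c * c * c \<le> c / 1000" using mult_left_mono[OF q3, of c] c0 mult_left_mono[OF c1 c0] by (simp add: mult_ac)
  have e: "(1 + c)^4 = 1 + 4*c + 6*(c*c) + 4*(c*c*c) + c*c*c*c" by (simp add: power4_eq_xxxx algebra_simps)
  show A: "(1 + c)^4 \<le> 1 + 47/10 * c" unfolding e using q2 q3 q4 c0 by linarith
  show "1 - 4 * c \<le> (1 - c)^4" using Bernoulli_inequality[of "-c" 4] c1 by simp
  have "c^2 \<le> c / 10" using q2 by (simp add: power2_eq_square)
  moreover have "(1 + c)^4 \<le> 3/2" using A c1 by linarith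
  ultimately have "c^2 * (1 + c)^4 \<le> (c / 10) * (3/2)" using c0 by (intro mult_mono) auto
  then show "c^2 * (1 + c)^4 \<le> c * (3/20)" by simp
qed

lemma perm_cases:
  fixes A :: "real^4^4" and p :: "4 \<Rightarrow> 4"
  assumes A1: "\<And>j. A$1$j = (if j = 1 then 1 else 0)" and A4: "\<And>i. A$i$4 = (if i = 4 then 1 else 0)"
    and p: "p permutes S" and nz: "\<And>i. i \<in> S \<Longrightarrow> A$i$(p i) \<noteq> 0"
  shows "p = id \<or> (p = Transposition.transpose 2 3 \<and> 2 \<in> S \<and> 3 \<in> S)"
proof -
  have inj: "inj p" using p by (rule permutes_inj)
  have ne: "p a \<noteq> p b" if "a \<noteq> b" for a b using inj that by (auto dest: injD)
  have fix_out: "i \<notin> S \<Longrightarrow> p i = i" for i using p by (rule permutes_not_in)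
  have p1: "p 1 = 1"
  proof (cases "1 \<in> S")
    case True
    have "A$1$(p 1) \<noteq> 0" by (rule nz[OF True])
    then show ?thesis using A1[of "p 1"] by (simp split: if_splits)
  qed (rule fix_out)
  have p4: "p 4 = 4"
  proof (cases "4 \<in> S")
    case True
    obtain j where j: "p j = 4" using permutes_surj[OF p] by (metis surjD)
    have jS: "j \<in> S"
    proof (rule ccontr)
      assume "j \<notin> S" then have "p j = j" by (rule fix_out)
      with j True \<open>j \<notin> S\<close> show False by simp
    qed
    have "A$j$(p j) \<noteq> 0" by (rule nz[OF jS])
    then have "j = 4" using j A4[of j] by (simp split: if_splits)
    then show ?thesis using j by simp
  qed (rule fix_out)
  have p2: "p 2 = 2 \<or> p 2 = 3"
  proof -
    have "p 2 \<noteq> p 1" by (rule ne) simp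
    moreover have "p 2 \<noteq> p 4" by (rule ne) simp
    ultimately show ?thesis using exhaust_4[of "p 2"] p1 p4 by auto
  qed
  have p3: "p 3 = 2 \<or> p 3 = 3"
  proof -
    have "p 3 \<noteq> p 1" by (rule ne) simp
    moreover have "p 3 \<noteq> p 4" by (rule ne) simp
    ultimately show ?thesis using exhaust_4[of "p 3"] p1 p4 by auto
  qed
  have p23: "p 2 \<noteq> p 3" by (rule ne) simp
  show ?thesis
  proof (cases "p 2 = 2")
    case True
    then have q3: "p 3 = 3" using p3 p23 by auto
    have "p = id"
    proof
      fix i :: 4 show "p i = id i" using exhaust_4[of i] True q3 p1 p4 by auto
    qed
    then show ?thesis by simp
  next
    case False
    then have q2: "p 2 = 3" using p2 by simp
    then have q3: "p 3 = 2" using p3 p23 by auto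
    have "2 \<in> S" using fix_out q2 by force
    moreover have "3 \<in> S" using fix_out q3 by force
    moreover have "p = Transposition.transpose 2 3"
    proof
      fix i :: 4 show "p i = Transposition.transpose 2 3 i"
        using exhaust_4[of i] q2 q3 p1 p4 by (auto simp: transpose_def)
    qed
    ultimately show ?thesis by simp
  qed
qed

lemma prod_bounds:
  fixes F :: "4 \<Rightarrow> real"
  assumes "\<And>i. i \<in> S' \<Longrightarrow> 1 - c \<le> F i \<and> F i \<le> 1 + c" and c0: "0 \<le> c" and c1: "c \<le> 1"
  shows "(1 - c)^4 \<le> (\<Prod>i\<in>S'. F i)" "(\<Prod>i\<in>S'. F i) \<le> (1 + c)^4" "\<bar>\<Prod>i\<in>S'. F i\<bar> \<le> (1 + c)^4"
proof -
  have cs: "card S' \<le> 4"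
  proof -
    have "card S' \<le> card (UNIV :: 4 set)" by (rule card_mono) auto
    then show ?thesis by simp
  qed
  have "(1 - c)^4 \<le> (1 - c)^card S'" using cs c0 c1 by (intro power_decreasing) auto
  also have "\<dots> = (\<Prod>i\<in>S'. (1 - c))" by simp
  also have "\<dots> \<le> (\<Prod>i\<in>S'. F i)" using assms c1 by (intro prod_mono) auto
  finally show "(1 - c)^4 \<le> (\<Prod>i\<in>S'. F i)" .
  have h1: "0 \<le> F i \<and> F i \<le> 1 + c" if "i \<in> S'" for i using assms(1)[OF that] c1 by auto
  have h2: "0 \<le> \<bar>F i\<bar> \<and> \<bar>F i\<bar> \<le> 1 + c" if "i \<in> S'" for i using assms(1)[OF that] c1 by auto
  have "(\<Prod>i\<in>S'. F i) \<le> (\<Prod>i\<in>S'. (1 + c))" using h1 by (intro prod_mono) auto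
  also have "\<dots> = (1 + c)^card S'" by simp
  also have "\<dots> \<le> (1 + c)^4" using cs c0 by (intro power_increasing) auto
  finally show "(\<Prod>i\<in>S'. F i) \<le> (1 + c)^4" .
  have "\<bar>\<Prod>i\<in>S'. F i\<bar> = (\<Prod>i\<in>S'. \<bar>F i\<bar>)" by (rule abs_prod)
  also have "\<dots> \<le> (\<Prod>i\<in>S'. (1 + c))" using h2 by (intro prod_mono) auto
  also have "\<dots> = (1 + c)^card S'" by simp
  also have "\<dots> \<le> (1 + c)^4" using cs c0 by (intro power_increasing) auto
  finally show "\<bar>\<Prod>i\<in>S'. F i\<bar> \<le> (1 + c)^4" .
qed

lemma minor_bound:
  fixes A :: "real^4^4"
  assumes A1: "\<And>j. A$1$j = (if j = 1 then 1 else 0)" and A4: "\<And>i. A$i$4 = (if i = 4 then 1 else 0)"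
    and d2: "\<bar>A$2$2 - 1\<bar> \<le> c" and d3: "\<bar>A$3$3 - 1\<bar> \<le> c"
    and o23: "\<bar>A$2$3\<bar> \<le> c" and o32: "\<bar>A$3$2\<bar> \<le> c"
    and c0: "0 \<le> c" and c1: "c \<le> 1/10"
  shows "\<bar>principal_minor A S - 1\<bar> \<le> 5 * c"
proof -
  define T where "T = Transposition.transpose (2::4) 3"
  define tm where "tm p = of_int (sign p) * (\<Prod>i\<in>S. A$i$(p i))" for p
  have fin: "finite S" by simp
  have dg: "1 - c \<le> A$i$i \<and> A$i$i \<le> 1 + c" for i
    using exhaust_4[of i] A1[of 1] A4[of 4] d2 d3 c0 by (auto simp: abs_le_iff)
  define Q where "Q = (if 2 \<in> S \<and> 3 \<in> S then {id, T} else {id})"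
  have QP: "Q \<subseteq> {p. p permutes S}"
    by (auto simp: Q_def T_def permutes_id permutes_swap_id)
  have zero: "tm p = 0" if "p \<in> {p. p permutes S} - Q" for p
  proof (rule ccontr)
    assume "tm p \<noteq> 0"
    then have "(\<Prod>i\<in>S. A$i$(p i)) \<noteq> 0" by (auto simp: tm_def)
    then have nz: "\<And>i. i \<in> S \<Longrightarrow> A$i$(p i) \<noteq> 0" using fin by (auto simp: prod_zero_iff)
    have "p permutes S" using that by simp
    from perm_cases[OF A1 A4 this nz] that show False by (auto simp: Q_def T_def split: if_splits)
  qed
  have pm: "principal_minor A S = sum tm Q"
    unfolding principal_minor_def tm_def[symmetric]
    using sum.mono_neutral_right[OF finite_permutations[OF fin] QP, of tm] zero by blast
  define a where "a = (\<Prod>i\<in>S. A$i$i)"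
  have ta: "tm id = a" by (simp add: tm_def a_def sign_id)
  have al: "1 - 4 * c \<le> a" and au: "a \<le> 1 + 47/10 * c"
  proof -
    have "(1 - c)^4 \<le> a" unfolding a_def by (rule prod_bounds(1)) (use dg c0 c1 in auto)
    then show "1 - 4 * c \<le> a" using poly_bounds(2)[OF c0 c1] by linarith
    have "a \<le> (1 + c)^4" unfolding a_def by (rule prod_bounds(2)) (use dg c0 c1 in auto)
    then show "a \<le> 1 + 47/10 * c" using poly_bounds(1)[OF c0 c1] by linarith
  qed
  show ?thesis
  proof (cases "2 \<in> S \<and> 3 \<in> S")
    case True
    have T2: "T 2 = 3" and T3: "T 3 = 2" by (simp_all add: T_def)
    have Tid: "T \<noteq> id" using T2 by auto
    define b where "b = (\<Prod>i\<in>S. A$i$(T i))"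
    have tT: "tm T = - b" by (simp add: tm_def b_def T_def sign_swap_id)
    have "b = A$2$(T 2) * (\<Prod>i\<in>S - {2}. A$i$(T i))" unfolding b_def using True by (intro prod.remove[OF fin]) simp
    also have "(\<Prod>i\<in>S - {2}. A$i$(T i)) = A$3$(T 3) * (\<Prod>i\<in>S - {2} - {3}. A$i$(T i))"
      by (rule prod.remove) (use True in auto)
    also have "(\<Prod>i\<in>S - {2} - {3}. A$i$(T i)) = (\<Prod>i\<in>S - {2} - {3}. A$i$i)"
      by (rule prod.cong) (auto simp: T_def transpose_def)
    finally have beq: "b = A$2$3 * (A$3$2 * (\<Prod>i\<in>S - {2} - {3}. A$i$i))" using T2 T3 by simp
    have "\<bar>\<Prod>i\<in>S - {2} - {3}. A$i$i\<bar> \<le> (1 + c)^4" by (rule prod_bounds(3)) (use dg c0 c1 in auto)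
    then have "\<bar>b\<bar> \<le> c * (c * (1 + c)^4)"
      unfolding beq abs_mult using o23 o32 c0 by (intro mult_mono) auto
    then have bb: "\<bar>b\<bar> \<le> c * (3/20)" using poly_bounds(3)[OF c0 c1] by (simp add: power2_eq_square mult_ac)
    have "principal_minor A S = a - b" using True Tid by (simp add: pm Q_def ta tT)
    then show ?thesis using al au bb c0 by (simp add: abs_le_iff) linarith
  next
    case False
    have "Q = {id}" using False by (auto simp: Q_def)
    then have "principal_minor A S = a" by (simp add: pm ta)
    then show ?thesis using al au c0 by (simp add: abs_le_iff)
  qed
qed


lemma entry_bound:
  fixes F :: "real^4 \<Rightarrow> real^4"
  assumes dF: "F differentiable (at p)" and r: "0 < r"
    and bd: "\<And>h. \<bar>h\<bar> < r \<Longrightarrow> \<bar>F (p + h *\<^sub>R axis j 1) $ i - F p $ i - h * a\<bar> \<le> c * \<bar>h\<bar>"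
  shows "\<bar>jacobian F (at p) $ i $ j - a\<bar> \<le> c"
proof -
  define F' where "F' = frechet_derivative F (at p)"
  define e :: "real^4" where "e = axis j 1"
  have hF: "(F has_derivative F') (at p)" using dF by (simp add: F'_def frechet_derivative_works[symmetric])
  have bl: "bounded_linear F'" using hF by (rule has_derivative_bounded_linear)
  have l1: "((\<lambda>h::real. p + h *\<^sub>R e) has_derivative (\<lambda>h. h *\<^sub>R e)) (at 0)"
    by (auto intro!: derivative_eq_intros)
  have hF0: "(F has_derivative F') (at ((\<lambda>h::real. p + h *\<^sub>R e) 0))" using hF by simp
  have "((\<lambda>h. F (p + h *\<^sub>R e)) has_derivative (\<lambda>h. F' (h *\<^sub>R e))) (at 0)"
    using diff_chain_at[OF l1 hF0] by (simp add: o_def)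
  from bounded_linear.has_derivative[OF bounded_linear_vec_nth[of i] this]
  have "((\<lambda>h. F (p + h *\<^sub>R e) $ i) has_derivative (\<lambda>h. F' (h *\<^sub>R e) $ i)) (at 0)" .
  moreover have "(\<lambda>h. F' (h *\<^sub>R e) $ i) = (*) (F' e $ i)"
  proof
    fix h :: real
    interpret bounded_linear F' by (rule bl)
    show "F' (h *\<^sub>R e) $ i = F' e $ i * h" by (simp add: scale)
  qed
  ultimately have D: "((\<lambda>h. F (p + h *\<^sub>R e) $ i) has_real_derivative F' e $ i) (at 0)"
    by (simp add: has_field_derivative_def)
  define \<phi> where "\<phi> h = F (p + h *\<^sub>R e) $ i" for h
  have lim: "((\<lambda>h. (\<phi> (0 + h) - \<phi> 0) / h) \<longlongrightarrow> F' e $ i) (at 0)"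
    using D unfolding DERIV_def \<phi>_def .
  then have lim2: "((\<lambda>h. \<bar>(\<phi> (0 + h) - \<phi> 0) / h - a\<bar>) \<longlongrightarrow> \<bar>F' e $ i - a\<bar>) (at 0)"
    by (intro tendsto_intros)
  have ev: "\<forall>\<^sub>F h in at 0. \<bar>(\<phi> (0 + h) - \<phi> 0) / h - a\<bar> \<le> c"
  proof -
    have "\<forall>\<^sub>F h in at (0::real). h \<noteq> 0 \<and> dist h 0 < r" using r eventually_at by blast
    then show ?thesis
    proof (rule eventually_mono)
      fix h :: real assume h: "h \<noteq> 0 \<and> dist h 0 < r"
      have "(\<phi> (0 + h) - \<phi> 0) / h - a = (\<phi> h - \<phi> 0 - h * a) / h" using h by (simp add: field_simps)
      also have "\<bar>\<dots>\<bar> = \<bar>\<phi> h - \<phi> 0 - h * a\<bar> / \<bar>h\<bar>" by simp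
      also have "\<dots> \<le> c * \<bar>h\<bar> / \<bar>h\<bar>" using bd[of h] h by (intro divide_right_mono) (auto simp: \<phi>_def e_def)
      also have "\<dots> = c" using h by simp
      finally show "\<bar>(\<phi> (0 + h) - \<phi> 0) / h - a\<bar> \<le> c" .
    qed
  qed
  have "\<bar>F' e $ i - a\<bar> \<le> c" by (rule tendsto_upperbound[OF lim2 ev]) simp
  then show ?thesis by (simp add: jacobian_def matrix_def F'_def e_def)
qed

lemma cont_bound:
  fixes g :: "real^2 \<Rightarrow> real"
  assumes "continuous_on UNIV g"
  shows "\<exists>G. \<forall>p. norm p \<le> r \<longrightarrow> \<bar>g p\<bar> \<le> G"
proof -
  have "compact (g ` cball 0 r)" by (rule compact_continuous_image[OF continuous_on_subset[OF assms]]) auto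
  then obtain G where "\<forall>y\<in>g ` cball 0 r. norm y \<le> G" using compact_imp_bounded bounded_iff by metis
  then have "\<forall>p. norm p \<le> r \<longrightarrow> \<bar>g p\<bar> \<le> G" by (simp add: mem_cball_0)
  then show ?thesis by blast
qed

lemma lip_C1:
  fixes g :: "real^2 \<Rightarrow> real"
  assumes g: "C1 g"
  shows "\<exists>L\<ge>0. \<forall>p q. norm p \<le> r \<longrightarrow> norm q \<le> r \<longrightarrow> \<bar>g p - g q\<bar> \<le> L * norm (p - q)"
proof -
  have "continuous_on UNIV (\<lambda>p. \<Sum>b\<in>Basis. \<bar>frechet_derivative g (at p) b\<bar>)"
    using g by (auto intro!: continuous_intros)
  then obtain M where M: "\<And>p. norm p \<le> r \<Longrightarrow> \<bar>\<Sum>b\<in>Basis. \<bar>frechet_derivative g (at p) b\<bar>\<bar> \<le> M"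
    using cont_bound by blast
  define L where "L = max M 0"
  have "\<bar>g p - g q\<bar> \<le> L * norm (p - q)" if p: "norm p \<le> r" and q: "norm q \<le> r" for p q
  proof -
    have "norm (g p - g q) \<le> L * norm (p - q)"
    proof (rule differentiable_bound[where f'="\<lambda>p. frechet_derivative g (at p)" and S="cball 0 r"])
      show "convex (cball (0::real^2) r)" by simp
      fix y :: "real^2" assume y: "y \<in> cball 0 r"
      show "(g has_derivative frechet_derivative g (at y)) (at y within cball 0 r)"
        using C1_deriv[OF g] by (rule has_derivative_at_withinI)
      have bl: "bounded_linear (frechet_derivative g (at y))" using C1_deriv[OF g] by (rule has_derivative_bounded_linear)
      have "onorm (frechet_derivative g (at y)) \<le> (\<Sum>b\<in>Basis. norm (frechet_derivative g (at y) b))"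
        by (rule onorm_componentwise[OF bl])
      also have "\<dots> \<le> M" using M[of y] y by (simp add: mem_cball_0)
      also have "\<dots> \<le> L" by (simp add: L_def)
      finally show "onorm (frechet_derivative g (at y)) \<le> L" .
    qed (use p q in \<open>auto simp: mem_cball_0\<close>)
    then show ?thesis by simp
  qed
  moreover have "L \<ge> 0" by (simp add: L_def)
  ultimately show ?thesis by blast
qed

lemma tnet_comp:
  "tnet f \<delta> x \<epsilon> q $ 1 = q $ 1"
  "tnet f \<delta> x \<epsilon> q $ 2 = x \<epsilon> (vector [q$2, q$3]) (q$1) $ 1"
  "tnet f \<delta> x \<epsilon> q $ 3 = x \<epsilon> (vector [q$2, q$3]) (q$1) $ 2"
  "tnet f \<delta> x \<epsilon> q $ 4 = vnet f \<delta> x \<epsilon> (vector [q$2, q$3]) (q$4) (q$1)"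
  by (simp_all add: tnet_def Let_def vector_4)

lemma shift4: "(p + h *\<^sub>R axis j 1 :: real^4) $ k = p $ k + (if k = j then h else 0)"
  by (simp add: axis_def)

lemma vshift:
  fixes p :: "real^4"
  shows "vector [(p + h *\<^sub>R axis 2 1)$2, (p + h *\<^sub>R axis 2 1)$3] = (vector [p$2, p$3] :: real^2) + h *\<^sub>R axis 1 1"
    "vector [(p + h *\<^sub>R axis 3 1)$2, (p + h *\<^sub>R axis 3 1)$3] = (vector [p$2, p$3] :: real^2) + h *\<^sub>R axis 2 1"
    "vector [(p + h *\<^sub>R axis 1 1)$2, (p + h *\<^sub>R axis 1 1)$3] = (vector [p$2, p$3] :: real^2)"
    "vector [(p + h *\<^sub>R axis 4 1)$2, (p + h *\<^sub>R axis 4 1)$3] = (vector [p$2, p$3] :: real^2)"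
  by (simp_all add: vec_eq_iff forall_2 axis_def)

lemma vd_comp:
  assumes "(y has_vector_derivative v) (at s)"
  shows "((\<lambda>t. y t $ i) has_real_derivative v $ i) (at s)"
proof -
  have "(y has_derivative (\<lambda>h. h *\<^sub>R v)) (at s)" using assms by (simp add: has_vector_derivative_def)
  from bounded_linear.has_derivative[OF bounded_linear_vec_nth[of i] this]
  have "((\<lambda>t. y t $ i) has_derivative (\<lambda>h. (h *\<^sub>R v) $ i)) (at s)" .
  moreover have "(\<lambda>h. (h *\<^sub>R v) $ i) = (*) (v $ i)" by (auto simp: fun_eq_iff)
  ultimately show ?thesis by (simp add: has_field_derivative_def)
qed


lemma part1:
  fixes f :: "real^2 \<Rightarrow> real" and \<delta> :: "real \<Rightarrow> real \<Rightarrow> real"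
    and x :: "real \<Rightarrow> real^2 \<Rightarrow> real \<Rightarrow> real^2" and K :: "(real^2) set"
  assumes f: "smooth f" and dn: "strict_delta_net \<delta>" and gn: "geodesic_net f \<delta> x"
    and K: "compact K" and d: "0 < d"
  shows "\<exists>\<eta>>0. \<exists>\<epsilon>0\<in>{0<..1}. \<forall>\<epsilon>\<in>{0<..\<epsilon>0}. \<forall>p::real^4. p$1 \<le> \<eta> \<and> vector [p$2, p$3] \<in> K \<longrightarrow>
              (\<forall>S. principal_minor (jacobian (tnet f \<delta> x \<epsilon>) (at p)) S \<in> {1 - d <..< 1 + d})"
proof -
  define c where "c = min (1/10) (d/10)"
  have c0: "0 < c" and c1: "c \<le> 1/10" and cd: "5 * c < d" using d by (auto simp: c_def)
  define K1 where "K1 = {X + v | X v. X \<in> K \<and> v \<in> cball (0::real^2) 1}"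
  have K1c: "compact K1" unfolding K1_def by (rule compact_sums[OF K compact_cball])
  have K1m: "X + v \<in> K1" if "X \<in> K" "norm v \<le> 1" for X v
  proof -
    have "v \<in> cball 0 1" using that(2) by (simp add: mem_cball_0)
    then show ?thesis unfolding K1_def using that(1) by blast
  qed
  have KK1: "X \<in> K1" if "X \<in> K" for X
  proof -
    have "X + 0 \<in> K1" by (rule K1m[OF that]) simp
    then show ?thesis by simp
  qed
  have gn2: "\<forall>K. compact K \<longrightarrow> (\<exists>\<epsilon>K>0. \<forall>X\<in>K. \<forall>\<epsilon>\<in>{0<..1}. \<epsilon> \<le> \<epsilon>K \<longrightarrow>
        (\<forall>U. \<forall>i. ((\<lambda>s. xdot x \<epsilon> X s $ i) has_real_derivative
                    (1/2 * partial f i (x \<epsilon> X U) * \<delta> \<epsilon> U)) (at U)) \<and>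
        x \<epsilon> X (-1) = X \<and> xdot x \<epsilon> X (-1) = 0)"
    using gn unfolding geodesic_net_def by (rule conjunct2)
  obtain \<epsilon>K where \<epsilon>K: "\<epsilon>K > 0" and ode0: "\<forall>X\<in>K1. \<forall>\<epsilon>\<in>{0<..1}. \<epsilon> \<le> \<epsilon>K \<longrightarrow>
        (\<forall>U. \<forall>i. ((\<lambda>s. xdot x \<epsilon> X s $ i) has_real_derivative
                    (1/2 * partial f i (x \<epsilon> X U) * \<delta> \<epsilon> U)) (at U)) \<and>
        x \<epsilon> X (-1) = X \<and> xdot x \<epsilon> X (-1) = 0"
    using gn2[rule_format, OF K1c] by (elim exE conjE) (rule that)
  have ode: "(\<forall>U. \<forall>i. ((\<lambda>s. xdot x \<epsilon> X s $ i) has_real_derivative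
                    (1/2 * partial f i (x \<epsilon> X U) * \<delta> \<epsilon> U)) (at U)) \<and>
        x \<epsilon> X (-1) = X \<and> xdot x \<epsilon> X (-1) = 0" if "X \<in> K1" "\<epsilon> \<in> {0<..1}" "\<epsilon> \<le> \<epsilon>K" for X \<epsilon>
    using ode0 that by blast
  have xsm: "smooth (xx x \<epsilon>)" if "\<epsilon> \<in> {0<..1}" for \<epsilon>
  proof -
    have "xx x \<epsilon> = (\<lambda>p. x \<epsilon> (fst p) (snd p))" by (simp add: fun_eq_iff xx_def)
    then show ?thesis using gn that by (simp add: geodesic_net_def)
  qed
  have dn3: "\<exists>C>0. \<forall>\<^sub>F \<epsilon> in at_right 0. integral UNIV (\<lambda>u. \<bar>\<delta> \<epsilon> u\<bar>) \<le> C"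
    using dn unfolding strict_delta_net_def by (elim conjE)
  then obtain C where C0: "C > 0" and evC: "\<forall>\<^sub>F \<epsilon> in at_right 0. integral UNIV (\<lambda>u. \<bar>\<delta> \<epsilon> u\<bar>) \<le> C"
    by blast
  obtain \<epsilon>1 where \<epsilon>1: "\<epsilon>1 > 0" and intC0: "\<forall>\<epsilon>>0. \<epsilon> < \<epsilon>1 \<longrightarrow> integral UNIV (\<lambda>u. \<bar>\<delta> \<epsilon> u\<bar>) \<le> C"
    using evC unfolding eventually_at_right_field by blast
  have intC: "integral UNIV (\<lambda>u. \<bar>\<delta> \<epsilon> u\<bar>) \<le> C" if "0 < \<epsilon>" "\<epsilon> < \<epsilon>1" for \<epsilon>
    using intC0 that by blast
  have dn1: "\<forall>\<epsilon>\<in>{0<..1}. smooth (\<delta> \<epsilon>) \<and> (\<forall>u. \<bar>u\<bar> > \<epsilon> \<longrightarrow> \<delta> \<epsilon> u = 0)"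
    using dn unfolding strict_delta_net_def by (elim conjE)
  have dsm: "smooth (\<delta> \<epsilon>)" "\<And>u. \<epsilon> < \<bar>u\<bar> \<Longrightarrow> \<delta> \<epsilon> u = 0" if "\<epsilon> \<in> {0<..1}" for \<epsilon>
    using dn1 that by auto
  obtain R0 where R0: "\<And>X. X \<in> K1 \<Longrightarrow> norm X \<le> R0" using compact_imp_bounded[OF K1c] bounded_iff by metis
  define R where "R = max R0 0"
  have R: "\<And>X. X \<in> K1 \<Longrightarrow> norm X \<le> R" and R0': "0 \<le> R" using R0 by (force simp: R_def)+
  have Cpf: "C1 (partial f i)" for i
  proof -
    have "partial f i = (\<lambda>p. frechet_derivative f (at p) (axis i 1))" by (simp add: fun_eq_iff partial_def)
    then show ?thesis using C1_dir[OF smooth_Ck[OF f]] by simp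
  qed
  have "continuous_on UNIV (\<lambda>p. \<bar>partial f 1 p\<bar> + \<bar>partial f 2 p\<bar>)"
    by (intro continuous_intros C1_cont[OF Cpf])
  then obtain G where G': "\<And>p. norm p \<le> R + 1 \<Longrightarrow> \<bar>\<bar>partial f 1 p\<bar> + \<bar>partial f 2 p\<bar>\<bar> \<le> G"
    using cont_bound by blast
  have G: "\<bar>partial f i p\<bar> \<le> G" if "norm p \<le> R + 1" for i p
    using G'[OF that] exhaust_2[of i] by auto
  have G0: "0 \<le> G" using G[of 0 1] R0' by simp
  obtain L1 where L1: "L1 \<ge> 0" "\<And>p q. norm p \<le> R + 1 \<Longrightarrow> norm q \<le> R + 1 \<Longrightarrow> \<bar>partial f 1 p - partial f 1 q\<bar> \<le> L1 * norm (p - q)"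
    using lip_C1[OF Cpf[of 1]] by blast
  obtain L2 where L2: "L2 \<ge> 0" "\<And>p q. norm p \<le> R + 1 \<Longrightarrow> norm q \<le> R + 1 \<Longrightarrow> \<bar>partial f 2 p - partial f 2 q\<bar> \<le> L2 * norm (p - q)"
    using lip_C1[OF Cpf[of 2]] by blast
  define L where "L = max L1 L2"
  have L0: "0 \<le> L" using L1 by (simp add: L_def)
  have lipP: "\<bar>partial f i p - partial f i q\<bar> \<le> L * norm (p - q)" if "norm p \<le> R + 1" "norm q \<le> R + 1" for i p q
  proof -
    have "L1 * norm (p - q) \<le> L * norm (p - q)" "L2 * norm (p - q) \<le> L * norm (p - q)"
      by (auto simp: L_def intro!: mult_right_mono)
    then show ?thesis using L1(2)[OF that] L2(2)[OF that] exhaust_2[of i] by auto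
  qed
  define T where "T = min 1 (min (c / (L * C + 1)) (1 / (4 * (G * C + 1))))"
  have LC0: "0 \<le> L * C" using L0 C0 by simp
  have GC0: "0 \<le> G * C" using G0 C0 by simp
  have T0: "0 < T" using c0 LC0 GC0 by (simp add: T_def)
  have T1: "T \<le> 1" by (simp add: T_def)
  have TL: "L * C * T \<le> c"
  proof -
    have "L * C * T \<le> (L * C + 1) * T" using T0 by (simp add: algebra_simps)
    also have "\<dots> \<le> (L * C + 1) * (c / (L * C + 1))" using LC0 by (intro mult_left_mono) (auto simp: T_def)
    also have "\<dots> = c" using LC0 by simp
    finally show ?thesis .
  qed
  have TG: "G * C * T \<le> 1/4"
  proof -
    have "G * C * T \<le> (G * C + 1) * T" using T0 by (simp add: algebra_simps)
    also have "\<dots> \<le> (G * C + 1) * (1 / (4 * (G * C + 1)))" using GC0 by (intro mult_left_mono) (auto simp: T_def)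
    also have "\<dots> = 1/4" using GC0 by simp
    finally show ?thesis .
  qed
  define \<eta> where "\<eta> = T / 2"
  define \<epsilon>0 where "\<epsilon>0 = min (T / 2) (min \<epsilon>K (\<epsilon>1 / 2))"
  have \<eta>0: "0 < \<eta>" using T0 by (simp add: \<eta>_def)
  have \<epsilon>00: "\<epsilon>0 \<in> {0<..1}" using T0 T1 \<epsilon>K \<epsilon>1 by (auto simp: \<epsilon>0_def)
  have main: "principal_minor (jacobian (tnet f \<delta> x \<epsilon>) (at p)) S \<in> {1 - d <..< 1 + d}"
    if \<epsilon>: "\<epsilon> \<in> {0<..\<epsilon>0}" and p1: "p$1 \<le> \<eta>" and pK: "vector [p$2, p$3] \<in> K" for \<epsilon> p S
  proof -
    define X :: "real^2" where "X = vector [p$2, p$3]"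
    define U where "U = p$1"
    have XK: "X \<in> K" using pK by (simp add: X_def)
    have e01: "\<epsilon> \<in> {0<..1}" using \<epsilon> \<epsilon>00 by auto
    have eK: "\<epsilon> \<le> \<epsilon>K" and e1: "\<epsilon> < \<epsilon>1" and eT: "\<eta> + \<epsilon> \<le> T" using \<epsilon> \<epsilon>1 by (auto simp: \<epsilon>0_def \<eta>_def)
    interpret tr: traj "partial f" "\<delta> \<epsilon>" \<epsilon> C
    proof
      show "0 < \<epsilon>" "\<epsilon> \<le> 1" using e01 by auto
      show "\<And>u. \<epsilon> < \<bar>u\<bar> \<Longrightarrow> \<delta> \<epsilon> u = 0" by (rule dsm(2)[OF e01])
      show "continuous_on UNIV (\<delta> \<epsilon>)" by (rule C1_cont[OF smooth_Ck[OF dsm(1)[OF e01]]])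
      show "integral UNIV (\<lambda>u. \<bar>\<delta> \<epsilon> u\<bar>) \<le> C" using intC e1 e01 by auto
      show "\<And>i. continuous_on UNIV (partial f i)" by (rule C1_cont[OF Cpf])
    qed
    have xc: "continuous_on UNIV (xx x \<epsilon>)" by (rule C1_cont[OF smooth_Ck[OF xsm[OF e01]]])
    have sol: "tr.sol (\<lambda>s. x \<epsilon> Y s) (\<lambda>s. xdot x \<epsilon> Y s) Y" if Y: "Y \<in> K1" for Y
    proof -
      have "continuous_on UNIV (\<lambda>s. xx x \<epsilon> (Y, s))"
        by (rule continuous_on_compose2[OF xc]) (auto intro!: continuous_intros)
      then have c: "continuous_on UNIV (\<lambda>s. x \<epsilon> Y s)" by (simp add: xx_def)
      have vd: "((\<lambda>s. x \<epsilon> Y s) has_vector_derivative xdot x \<epsilon> Y s) (at s)" for s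
        using xdot_vd[OF xsm[OF e01], of Y s] by simp
      show ?thesis unfolding tr.sol_def
        using c vd_comp[OF vd] ode[OF Y e01 eK] by blast
    qed
    have conf: "norm (x \<epsilon> Y s) \<le> R + 1" if Y: "Y \<in> K1" and s: "s \<le> \<eta>" for Y s
    proof -
      have "G * C * (\<eta> + \<epsilon>) \<le> G * C * T" using eT GC0 by (intro mult_left_mono) auto
      then have small: "G * C * (\<eta> + \<epsilon>) \<le> 1/4" using TG by linarith
      have "norm (x \<epsilon> Y s - Y) \<le> 1/2"
        by (rule tr.confine[OF sol[OF Y] R[OF Y] G small s])
      moreover have "norm (x \<epsilon> Y s) \<le> norm Y + norm (x \<epsilon> Y s - Y)" by (rule norm_triangle_sub)
      ultimately show ?thesis using R[OF Y] by linarith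
    qed
    have lipx: "\<bar>(x \<epsilon> Z s - x \<epsilon> Y s) $ k - (Z - Y) $ k\<bar> \<le> c * norm (Z - Y)"
      if Y: "Y \<in> K1" and Z: "Z \<in> K1" and s: "s \<le> \<eta>" for Y Z s k
    proof (rule tr.lip[OF sol[OF Y] sol[OF Z] _ lipP L0])
      fix t assume "t \<in> {-\<epsilon>..\<eta>}"
      then show "norm (x \<epsilon> Y t) \<le> R + 1 \<and> norm (x \<epsilon> Z t) \<le> R + 1" using conf Y Z by auto
    next
      have "L * C * (\<eta> + \<epsilon>) \<le> L * C * T" using eT LC0 by (intro mult_left_mono) auto
      then show "L * C * (\<eta> + \<epsilon>) \<le> c" using TL by linarith
    qed (use \<eta>0 c1 s in auto)
    have blk: "\<bar>x \<epsilon> (X + h *\<^sub>R axis m 1) U $ k - x \<epsilon> X U $ k - h * (if k = m then 1 else 0)\<bar> \<le> c * \<bar>h\<bar>"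
      if h: "\<bar>h\<bar> < 1" for h m k
    proof -
      define Z where "Z = X + h *\<^sub>R axis m 1"
      have Z: "Z \<in> K1" using h unfolding Z_def by (intro K1m[OF XK]) auto
      have l: "\<bar>(x \<epsilon> Z U - x \<epsilon> X U) $ k - (Z - X) $ k\<bar> \<le> c * norm (Z - X)"
        by (rule lipx[OF KK1[OF XK] Z]) (use p1 in \<open>simp add: U_def\<close>)
      have e1: "(Z - X) $ k = h * (if k = m then 1 else 0)" by (simp add: Z_def axis_def)
      have e2: "norm (Z - X) = \<bar>h\<bar>" by (simp add: Z_def)
      have e3: "(x \<epsilon> Z U - x \<epsilon> X U) $ k = x \<epsilon> Z U $ k - x \<epsilon> X U $ k" by simp
      have "\<bar>x \<epsilon> Z U $ k - x \<epsilon> X U $ k - h * (if k = m then 1 else 0)\<bar> \<le> c * \<bar>h\<bar>"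
        using l by (simp only: e1 e2 e3)
      then show ?thesis by (simp only: Z_def)
    qed
    define A where "A = jacobian (tnet f \<delta> x \<epsilon>) (at p)"
    have dF: "tnet f \<delta> x \<epsilon> differentiable (at p)"
      by (rule tnet_diff[where \<delta>=\<delta> and \<epsilon>=\<epsilon>, OF f dsm(1)[OF e01] xsm[OF e01]])
    have eb: "\<bar>A $ i $ j - a\<bar> \<le> c'" if "\<And>h. \<bar>h\<bar> < 1 \<Longrightarrow>
        \<bar>tnet f \<delta> x \<epsilon> (p + h *\<^sub>R axis j 1) $ i - tnet f \<delta> x \<epsilon> p $ i - h * a\<bar> \<le> c' * \<bar>h\<bar>" for i j a c'
      unfolding A_def by (rule entry_bound[OF dF, of 1]) (use that in auto)
    have A1: "A$1$j = (if j = 1 then 1 else 0)" for j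
    proof -
      have "\<bar>A $ 1 $ j - (if j = 1 then 1 else 0)\<bar> \<le> 0"
        by (rule eb) (simp add: tnet_comp shift4 axis_def)
      then show ?thesis by simp
    qed
    have A4: "A$i$4 = (if i = 4 then 1 else 0)" for i
    proof -
      have "\<bar>A $ i $ 4 - (if i = 4 then 1 else 0)\<bar> \<le> 0"
      proof (rule eb)
        fix h :: real
        show "\<bar>tnet f \<delta> x \<epsilon> (p + h *\<^sub>R axis 4 1) $ i - tnet f \<delta> x \<epsilon> p $ i - h * (if i = 4 then 1 else 0)\<bar> \<le> 0 * \<bar>h\<bar>"
          using exhaust_4[of i] by (elim disjE) (simp_all add: tnet_comp axis_def vnet_def)
      qed
      then show ?thesis by simp
    qed
    have s1: "(p + h *\<^sub>R axis 2 1)$1 = p$1" "(p + h *\<^sub>R axis 3 1)$1 = p$1" for h :: real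
      by (simp_all add: axis_def)
    have d2: "\<bar>A$2$2 - 1\<bar> \<le> c"
    proof (rule eb)
      fix h :: real assume "\<bar>h\<bar> < 1"
      have "tnet f \<delta> x \<epsilon> (p + h *\<^sub>R axis 2 1) $ 2 = x \<epsilon> (X + h *\<^sub>R axis 1 1) U $ 1"
        by (simp only: tnet_comp vshift s1 X_def U_def)
      moreover have "tnet f \<delta> x \<epsilon> p $ 2 = x \<epsilon> X U $ 1" by (simp only: tnet_comp X_def U_def)
      ultimately show "\<bar>tnet f \<delta> x \<epsilon> (p + h *\<^sub>R axis 2 1) $ 2 - tnet f \<delta> x \<epsilon> p $ 2 - h * 1\<bar> \<le> c * \<bar>h\<bar>"
        using blk[OF \<open>\<bar>h\<bar> < 1\<close>, of 1 1] by simp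
    qed
    have d3: "\<bar>A$3$3 - 1\<bar> \<le> c"
    proof (rule eb)
      fix h :: real assume "\<bar>h\<bar> < 1"
      have "tnet f \<delta> x \<epsilon> (p + h *\<^sub>R axis 3 1) $ 3 = x \<epsilon> (X + h *\<^sub>R axis 2 1) U $ 2"
        by (simp only: tnet_comp vshift s1 X_def U_def)
      moreover have "tnet f \<delta> x \<epsilon> p $ 3 = x \<epsilon> X U $ 2" by (simp only: tnet_comp X_def U_def)
      ultimately show "\<bar>tnet f \<delta> x \<epsilon> (p + h *\<^sub>R axis 3 1) $ 3 - tnet f \<delta> x \<epsilon> p $ 3 - h * 1\<bar> \<le> c * \<bar>h\<bar>"
        using blk[OF \<open>\<bar>h\<bar> < 1\<close>, of 2 2] by simp
    qed
    have o23: "\<bar>A$2$3 - 0\<bar> \<le> c"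
    proof (rule eb)
      fix h :: real assume "\<bar>h\<bar> < 1"
      have "tnet f \<delta> x \<epsilon> (p + h *\<^sub>R axis 3 1) $ 2 = x \<epsilon> (X + h *\<^sub>R axis 2 1) U $ 1"
        by (simp only: tnet_comp vshift s1 X_def U_def)
      moreover have "tnet f \<delta> x \<epsilon> p $ 2 = x \<epsilon> X U $ 1" by (simp only: tnet_comp X_def U_def)
      ultimately show "\<bar>tnet f \<delta> x \<epsilon> (p + h *\<^sub>R axis 3 1) $ 2 - tnet f \<delta> x \<epsilon> p $ 2 - h * 0\<bar> \<le> c * \<bar>h\<bar>"
        using blk[OF \<open>\<bar>h\<bar> < 1\<close>, of 2 1] by simp
    qed
    have o32: "\<bar>A$3$2 - 0\<bar> \<le> c"
    proof (rule eb)
      fix h :: real assume "\<bar>h\<bar> < 1"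
      have "tnet f \<delta> x \<epsilon> (p + h *\<^sub>R axis 2 1) $ 3 = x \<epsilon> (X + h *\<^sub>R axis 1 1) U $ 2"
        by (simp only: tnet_comp vshift s1 X_def U_def)
      moreover have "tnet f \<delta> x \<epsilon> p $ 3 = x \<epsilon> X U $ 2" by (simp only: tnet_comp X_def U_def)
      ultimately show "\<bar>tnet f \<delta> x \<epsilon> (p + h *\<^sub>R axis 2 1) $ 3 - tnet f \<delta> x \<epsilon> p $ 3 - h * 0\<bar> \<le> c * \<bar>h\<bar>"
        using blk[OF \<open>\<bar>h\<bar> < 1\<close>, of 1 2] by simp
    qed
    have "\<bar>principal_minor A S - 1\<bar> \<le> 5 * c"
      by (rule minor_bound[OF A1 A4 d2 d3]) (use o23 o32 c0 c1 in auto)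
    then show ?thesis using cd by (auto simp: A_def abs_le_iff)
  qed
  show ?thesis using \<eta>0 \<epsilon>00 main by blast
qed

lemma det_pm: "det A = principal_minor A UNIV"
  by (simp add: det_def principal_minor_def)

theorem proposition6p4:
  fixes f :: "real^2 \<Rightarrow> real"
    and \<delta> :: "real \<Rightarrow> real \<Rightarrow> real"
    and x :: "real \<Rightarrow> real^2 \<Rightarrow> real \<Rightarrow> real^2"
  assumes "smooth f"
    and "strict_delta_net \<delta>"
    and "geodesic_net f \<delta> x"
  shows "(\<forall>K::(real^2) set. compact K \<longrightarrow> (\<forall>d>0. \<exists>\<eta>>0. \<exists>\<epsilon>0\<in>{0<..1}.
            \<forall>\<epsilon>\<in>{0<..\<epsilon>0}. \<forall>p::real^4. p$1 \<le> \<eta> \<and> vector [p$2, p$3] \<in> K \<longrightarrow>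
              (\<forall>S. principal_minor (jacobian (tnet f \<delta> x \<epsilon>) (at p)) S \<in> {1 - d <..< 1 + d})))
       \<and> (\<forall>K::(real^2) set. compact K \<longrightarrow> (\<exists>\<eta>>0. \<exists>\<epsilon>0\<in>{0<..1}.
            (\<forall>\<epsilon>\<in>{0<..\<epsilon>0}. \<forall>p::real^4. p$1 \<le> \<eta> \<and> vector [p$2, p$3] \<in> K \<longrightarrow>
              (\<forall>S. principal_minor (jacobian (tnet f \<delta> x \<epsilon>) (at p)) S > 0))
          \<and> strictly_nonzero (\<lambda>\<epsilon> p. det (jacobian (tnet f \<delta> x \<epsilon>) (at p)))
              {p::real^4. p$1 \<le> \<eta> \<and> vector [p$2, p$3] \<in> K}))"
proof (intro conjI allI impI)
  fix K :: "(real^2) set" and d :: real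
  assume "compact K" "0 < d"
  then show "\<exists>\<eta>>0. \<exists>\<epsilon>0\<in>{0<..1}.
            \<forall>\<epsilon>\<in>{0<..\<epsilon>0}. \<forall>p::real^4. p$1 \<le> \<eta> \<and> vector [p$2, p$3] \<in> K \<longrightarrow>
              (\<forall>S. principal_minor (jacobian (tnet f \<delta> x \<epsilon>) (at p)) S \<in> {1 - d <..< 1 + d})"
    by (rule part1[OF assms])
next
  fix K :: "(real^2) set"
  assume K: "compact K"
  obtain \<eta> \<epsilon>0 where \<eta>: "\<eta> > 0" and \<epsilon>0: "\<epsilon>0 \<in> {0<..1}" and H: "\<And>\<epsilon> p S. \<epsilon> \<in> {0<..\<epsilon>0} \<Longrightarrow> p$1 \<le> \<eta> \<and> vector [p$2, p$3] \<in> K \<Longrightarrow>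
      principal_minor (jacobian (tnet f \<delta> x \<epsilon>) (at p)) S \<in> {1 - 1/2 <..< 1 + 1/2}"
    using part1[OF assms K, of "1/2"] by auto
  have pos: "\<forall>\<epsilon>\<in>{0<..\<epsilon>0}. \<forall>p::real^4. p$1 \<le> \<eta> \<and> vector [p$2, p$3] \<in> K \<longrightarrow>
              (\<forall>S. principal_minor (jacobian (tnet f \<delta> x \<epsilon>) (at p)) S > 0)"
  proof (intro ballI allI impI)
    fix \<epsilon> and p :: "real^4" and S
    assume "\<epsilon> \<in> {0<..\<epsilon>0}" "p$1 \<le> \<eta> \<and> vector [p$2, p$3] \<in> K"
    from H[OF this, of S] show "principal_minor (jacobian (tnet f \<delta> x \<epsilon>) (at p)) S > 0" by simp
  qed
  have sn: "strictly_nonzero (\<lambda>\<epsilon> p. det (jacobian (tnet f \<delta> x \<epsilon>) (at p)))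
              {p::real^4. p$1 \<le> \<eta> \<and> vector [p$2, p$3] \<in> K}"
    unfolding strictly_nonzero_def
  proof (intro exI[of _ "1/2"] conjI exI[of _ "0::nat"] bexI[of _ \<epsilon>0] ballI)
    fix \<epsilon> and p :: "real^4"
    assume e: "\<epsilon> \<in> {0<..\<epsilon>0}" and p: "p \<in> {p. p$1 \<le> \<eta> \<and> vector [p$2, p$3] \<in> K}"
    have "principal_minor (jacobian (tnet f \<delta> x \<epsilon>) (at p)) UNIV \<in> {1 - 1/2 <..< 1 + 1/2}"
      using H[OF e] p by auto
    then show "1/2 * \<epsilon> ^ 0 \<le> \<bar>det (jacobian (tnet f \<delta> x \<epsilon>) (at p))\<bar>"
      by (simp add: det_pm)
  qed (use \<epsilon>0 in auto)
  show "\<exists>\<eta>>0. \<exists>\<epsilon>0\<in>{0<..1}.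
            (\<forall>\<epsilon>\<in>{0<..\<epsilon>0}. \<forall>p::real^4. p$1 \<le> \<eta> \<and> vector [p$2, p$3] \<in> K \<longrightarrow>
              (\<forall>S. principal_minor (jacobian (tnet f \<delta> x \<epsilon>) (at p)) S > 0))
          \<and> strictly_nonzero (\<lambda>\<epsilon> p. det (jacobian (tnet f \<delta> x \<epsilon>) (at p)))
              {p::real^4. p$1 \<le> \<eta> \<and> vector [p$2, p$3] \<in> K}"
    using \<eta> \<epsilon>0 pos sn by blast
qed


end
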